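(* Let $F$ be quadratic and assume (A1), (A2), (A4). Let $\mathbf C=1$ for \texttt{MCM} and $\mathbf C=N$ for \texttt{Rand-MCM} (as in the context), and $\widetilde g_k=\frac1N\sum_{i=1}^N\mathcal{C}_{\mathrm{up}}(g_k^i(\widehat w^i_{k-1}))$. Then for any $k\ge1$, almost surely, $$\mathbb{E}\Big[\Big\|\frac1N\sum_{i=1}^N\big(\mathcal{C}_{\mathrm{up}}(g_k^i(\widehat w^i_{k-1}))-\nabla F(\widehat w^i_{k-1})\big)\Big\|^2\,\Big|\,w_{k-1}\Big]\le\frac{\omega_{\mathrm{up}}}N\|\nabla F(w_{k-1})\|^2+\frac{\sigma^2(1+\omega_{\mathrm{up}})}{Nb}+\frac{\omega_{\mathrm{up}}\omega_{\mathrm{dwn}}L^2}{N}\cdot\frac1N\sum_{i=1}^N\|w_{k-1}-H^i_{k-2}\|^2,$$ $$\mathbb{E}\big[\|\widetilde g_k\|^2\,\big|\,w_{k-1}\big]\le\Big(1+\frac{\omega_{\mathrm{up}}}N\Big)\|\nabla F(w_{k-1})\|^2+\frac{\sigma^2(1+\omega_{\mathrm{up}})}{Nb}+L^2\omega_{\mathrm{dwn}}\Big(\frac1{\mathbf C}+\frac{\omega_{\mathrm{up}}}N\Big)\frac1N\sum_{i=1}^N\|w_{k-1}-H^i_{k-2}\|^2.$$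
   Context: $N\ge1$ homogeneous workers, objective $F:\mathbb{R}^d\to\mathbb{R}$, quadratic: $F(w)-F(w_* )=\frac12(w-w_* )^\top A(w-w_* )$ for a symmetric matrix $A$ and a point $w_*$. Worker $i$ at iteration $k$ has an oracle $g_k^i$ (mini-batch $b$) with $\mathbb{E}[g_k^i(w)]=\nabla F(w)$; all compressions and oracle calls use fresh, mutually independent randomness. \texttt{Rand-MCM} with step $\gamma$, rate $\alpha_{\mathrm{dwn}}$: $H^i_{-1}=w_0$, $\widehat w^i_0=w_0$; for $k\ge1$: $w_k=w_{k-1}-\gamma\widetilde g_k$, $\widehat w^i_k=H^i_{k-1}+\mathcal{C}_{\mathrm{dwn},i}(w_k-H^i_{k-1})$, $H^i_k=H^i_{k-1}+\alpha_{\mathrm{dwn}}\mathcal{C}_{\mathrm{dwn},i}(w_k-H^i_{k-1})$ (same realization), $\mathcal{C}_{\mathrm{dwn},i}$ mutually independent. \texttt{MCM}: same with one shared memory $H^i_k=H_k$ and one shared downlink compression, so $\widehat w^i_k=\widehat w_k$. $\mathbb{E}[\cdot\mid w_{k-1}]$: conditional expectation given all randomness up to the computation of $w_{k-1}$. (A1) for some $\omega_{\mathrm{up}},\omega_{\mathrm{dwn}}>0$, all $w$: $\mathbb{E}[\mathcal{C}(w)]=w$ and $\mathbb{E}\|\mathcal{C}(w)-w\|^2\le\omega\|w\|^2$ for uplink/downlink operators with the respective $\omega$. (A2) $F$ $L$-smooth. (A4) $\mathbb{E}\|g_k^i(w)-\nabla F(w)\|^2\le\sigma^2/b$. *)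

theory Defs
  imports "HOL-Probability.Probability"
begin

text \<open>Which of the two algorithms is run: MCM (one shared downlink compression
  and one shared memory) or Rand-MCM (independent downlink compressions and
  memories per worker).\<close>
datatype variant = MCM | Rand_MCM

definition random_operator :: "'s measure \<Rightarrow> ('s \<Rightarrow> real^'n \<Rightarrow> real^'n) \<Rightarrow> bool" where
  "random_operator P C \<longleftrightarrow> prob_space P \<and>
     (\<lambda>(s, x). C s x) \<in> borel_measurable (P \<Otimes>\<^sub>M borel)"

definition unbiased_compressor ::
    "'s measure \<Rightarrow> ('s \<Rightarrow> real^'n \<Rightarrow> real^'n) \<Rightarrow> real \<Rightarrow> bool" where
  "unbiased_compressor P C \<omega> \<longleftrightarrow> random_operator P C \<and>
     (\<forall>w. integrable P (\<lambda>s. C s w) \<and> (\<integral>s. C s w \<partial>P) = w \<and>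
          (\<integral>\<^sup>+s. ennreal ((norm (C s w - w))\<^sup>2) \<partial>P) \<le> ennreal (\<omega> * (norm w)\<^sup>2))"

text \<open>(A4): unbiased stochastic gradient oracle for the gradient G with variance
  bound v (= sigma^2 / b).\<close>
definition stoch_oracle ::
    "'s measure \<Rightarrow> ('s \<Rightarrow> real^'n \<Rightarrow> real^'n) \<Rightarrow> (real^'n \<Rightarrow> real^'n) \<Rightarrow> real \<Rightarrow> bool" where
  "stoch_oracle P g G v \<longleftrightarrow> random_operator P g \<and>
     (\<forall>w. integrable P (\<lambda>s. g s w) \<and> (\<integral>s. g s w \<partial>P) = G w \<and>
          (\<integral>\<^sup>+s. ennreal ((norm (g s w - G w))\<^sup>2) \<partial>P) \<le> ennreal v)"

definition is_quadratic :: "(real^'n \<Rightarrow> real) \<Rightarrow> real^'n^'n \<Rightarrow> real^'n \<Rightarrow> bool" where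
  "is_quadratic F A wst \<longleftrightarrow> transpose A = A \<and>
     (\<forall>w. F w - F wst = 1/2 * ((w - wst) \<bullet> (A *v (w - wst))))"

definition L_smooth :: "(real^'n \<Rightarrow> real) \<Rightarrow> real \<Rightarrow> bool" where
  "L_smooth F L \<longleftrightarrow> (\<exists>G. (\<forall>x. GDERIV F x :> G x) \<and>
     (\<forall>x y. norm (G x - G y) \<le> L * norm (x - y)))"

end

theory Submission
  imports Defs
begin

definition AP :: "'s measure \<Rightarrow> ('s \<Rightarrow> 'v::euclidean_space) \<Rightarrow> bool" where
 "AP M Y \<longleftrightarrow> (\<forall>a. (\<integral>\<^sup>+z. ennreal ((norm (a + Y z))\<^sup>2) \<partial>M) =
     ennreal ((norm a)\<^sup>2) + (\<integral>\<^sup>+z. ennreal ((norm (Y z))\<^sup>2) \<partial>M))"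

lemma AP_base:
  fixes Y :: "'s \<Rightarrow> 'v::euclidean_space"
  assumes P: "prob_space M" and meas: "Y \<in> borel_measurable M" and int: "integrable M Y"
    and mean: "integral\<^sup>L M Y = 0" and fin: "(\<integral>\<^sup>+z. ennreal ((norm (Y z))\<^sup>2) \<partial>M) < \<infinity>"
  shows "AP M Y"
  unfolding AP_def
proof
  fix a :: 'v
  interpret prob_space M by (rule P)
  have i2: "integrable M (\<lambda>z. (norm (Y z))\<^sup>2)"
    using fin meas by (intro integrableI_bounded) (auto simp: less_top)
  have i1: "integrable M (\<lambda>z. 2 * inner a (Y z))"
    using int by (intro integrable_mult_right integrable_inner_right)
  have eq: "\<And>z. (norm (a + Y z))\<^sup>2 = (norm a)\<^sup>2 + 2 * inner a (Y z) + (norm (Y z))\<^sup>2"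
    by (simp add: power2_norm_eq_inner inner_add_left inner_add_right inner_commute)
  have ia: "integrable M (\<lambda>z. (norm (a + Y z))\<^sup>2)"
    unfolding eq using i1 i2 by auto
  have "(\<integral>z. (norm (a + Y z))\<^sup>2 \<partial>M) = (norm a)\<^sup>2 + (\<integral>z. (norm (Y z))\<^sup>2 \<partial>M)"
  proof -
    have "(\<integral>z. (norm (a + Y z))\<^sup>2 \<partial>M) = (\<integral>z. (norm a)\<^sup>2 + 2 * inner a (Y z) \<partial>M) + (\<integral>z. (norm (Y z))\<^sup>2 \<partial>M)"
      unfolding eq using i1 i2 by (subst Bochner_Integration.integral_add) auto
    also have "(\<integral>z. (norm a)\<^sup>2 + 2 * inner a (Y z) \<partial>M) = (norm a)\<^sup>2 + 2 * inner a (integral\<^sup>L M Y)"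
      using i1 int by (subst Bochner_Integration.integral_add) (auto simp: prob_space)
    finally show ?thesis using mean by simp
  qed
  then show "(\<integral>\<^sup>+z. ennreal ((norm (a + Y z))\<^sup>2) \<partial>M) =
     ennreal ((norm a)\<^sup>2) + (\<integral>\<^sup>+z. ennreal ((norm (Y z))\<^sup>2) \<partial>M)"
    using ia i2 by (simp add: nn_integral_eq_integral ennreal_plus)
qed

lemma AP_scale:
  fixes Y :: "'s \<Rightarrow> 'v::euclidean_space"
  assumes ap: "AP M Y" and meas: "Y \<in> borel_measurable M" and P: "prob_space M"
  shows "AP M (\<lambda>z. c *\<^sub>R Y z)"
proof (cases "c = 0")
  case True then show ?thesis using P by (simp add: AP_def prob_space.emeasure_space_1)
next
  case False
  have key: "\<And>a. (\<integral>\<^sup>+z. ennreal ((norm (a + c *\<^sub>R Y z))\<^sup>2) \<partial>M) =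
     ennreal (c\<^sup>2) * (ennreal ((norm (a /\<^sub>R c))\<^sup>2) + (\<integral>\<^sup>+z. ennreal ((norm (Y z))\<^sup>2) \<partial>M))"
  proof -
    fix a :: 'v
    have "\<And>z. (norm (a + c *\<^sub>R Y z))\<^sup>2 = c\<^sup>2 * (norm (a /\<^sub>R c + Y z))\<^sup>2"
    proof -
      fix z
      have "a + c *\<^sub>R Y z = c *\<^sub>R (a /\<^sub>R c + Y z)" using False by (simp add: scaleR_add_right)
      then show "(norm (a + c *\<^sub>R Y z))\<^sup>2 = c\<^sup>2 * (norm (a /\<^sub>R c + Y z))\<^sup>2"
        by (simp add: power_mult_distrib)
    qed
    then have "(\<integral>\<^sup>+z. ennreal ((norm (a + c *\<^sub>R Y z))\<^sup>2) \<partial>M) =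
        (\<integral>\<^sup>+z. ennreal (c\<^sup>2) * ennreal ((norm (a /\<^sub>R c + Y z))\<^sup>2) \<partial>M)"
      by (simp add: ennreal_mult)
    also have "\<dots> = ennreal (c\<^sup>2) * (\<integral>\<^sup>+z. ennreal ((norm (a /\<^sub>R c + Y z))\<^sup>2) \<partial>M)"
      using meas by (intro nn_integral_cmult) measurable
    finally show "?thesis a" using ap unfolding AP_def by simp
  qed
  show ?thesis unfolding AP_def
  proof
    fix a :: 'v
    have "(\<integral>\<^sup>+z. ennreal ((norm (0 + c *\<^sub>R Y z))\<^sup>2) \<partial>M) =
     ennreal (c\<^sup>2) * (\<integral>\<^sup>+z. ennreal ((norm (Y z))\<^sup>2) \<partial>M)" using key[of 0] by simp
    then have k0: "(\<integral>\<^sup>+z. ennreal ((norm (c *\<^sub>R Y z))\<^sup>2) \<partial>M) =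
     ennreal (c\<^sup>2) * (\<integral>\<^sup>+z. ennreal ((norm (Y z))\<^sup>2) \<partial>M)" by simp
    have "ennreal (c\<^sup>2) * ennreal ((norm (a /\<^sub>R c))\<^sup>2) = ennreal ((norm a)\<^sup>2)"
      using False by (simp add: ennreal_mult[symmetric] power_mult_distrib power_inverse)
    then show "(\<integral>\<^sup>+z. ennreal ((norm (a + c *\<^sub>R Y z))\<^sup>2) \<partial>M) =
     ennreal ((norm a)\<^sup>2) + (\<integral>\<^sup>+z. ennreal ((norm (c *\<^sub>R Y z))\<^sup>2) \<partial>M)"
      unfolding key k0 by (simp add: distrib_left)
  qed
qed

lemma AP_pair:
  fixes Z :: "'a \<Rightarrow> 'v::euclidean_space"
  assumes P1: "prob_space M1" and P2: "prob_space M2"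
    and mZ[measurable]: "Z \<in> borel_measurable M1" and mE[measurable]: "E \<in> borel_measurable (M1 \<Otimes>\<^sub>M M2)"
    and apZ: "AP M1 Z" and apE: "\<And>d. d \<in> space M1 \<Longrightarrow> AP M2 (\<lambda>e. E (d, e))"
  shows "AP (M1 \<Otimes>\<^sub>M M2) (\<lambda>p. Z (fst p) + E p)"
    "(\<integral>\<^sup>+p. ennreal ((norm (Z (fst p) + E p))\<^sup>2) \<partial>(M1 \<Otimes>\<^sub>M M2)) =
     (\<integral>\<^sup>+d. ennreal ((norm (Z d))\<^sup>2) \<partial>M1) + (\<integral>\<^sup>+d. \<integral>\<^sup>+e. ennreal ((norm (E (d, e)))\<^sup>2) \<partial>M2 \<partial>M1)"
proof -
  interpret p2: prob_space M2 by (rule P2)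
  define s where "s d = (\<integral>\<^sup>+e. ennreal ((norm (E (d, e)))\<^sup>2) \<partial>M2)" for d
  have ms: "s \<in> borel_measurable M1" unfolding s_def by measurable
  have key: "(\<integral>\<^sup>+p. ennreal ((norm (a + (Z (fst p) + E p)))\<^sup>2) \<partial>(M1 \<Otimes>\<^sub>M M2)) =
     ennreal ((norm a)\<^sup>2) + (\<integral>\<^sup>+d. ennreal ((norm (Z d))\<^sup>2) \<partial>M1) + (\<integral>\<^sup>+d. s d \<partial>M1)" for a
  proof -
    have "(\<integral>\<^sup>+p. ennreal ((norm (a + (Z (fst p) + E p)))\<^sup>2) \<partial>(M1 \<Otimes>\<^sub>M M2)) =
       (\<integral>\<^sup>+d. \<integral>\<^sup>+e. ennreal ((norm ((a + Z d) + E (d, e)))\<^sup>2) \<partial>M2 \<partial>M1)"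
      by (subst p2.nn_integral_fst[symmetric]) (auto simp: add.assoc)
    also have "\<dots> = (\<integral>\<^sup>+d. ennreal ((norm (a + Z d))\<^sup>2) + s d \<partial>M1)"
      using apE unfolding AP_def s_def by (intro nn_integral_cong) auto
    also have "\<dots> = (\<integral>\<^sup>+d. ennreal ((norm (a + Z d))\<^sup>2) \<partial>M1) + (\<integral>\<^sup>+d. s d \<partial>M1)"
      using ms by (intro nn_integral_add) auto
    finally show ?thesis using apZ unfolding AP_def by simp
  qed
  show "(\<integral>\<^sup>+p. ennreal ((norm (Z (fst p) + E p))\<^sup>2) \<partial>(M1 \<Otimes>\<^sub>M M2)) =
     (\<integral>\<^sup>+d. ennreal ((norm (Z d))\<^sup>2) \<partial>M1) + (\<integral>\<^sup>+d. \<integral>\<^sup>+e. ennreal ((norm (E (d, e)))\<^sup>2) \<partial>M2 \<partial>M1)"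
    using key[of 0] unfolding s_def by simp
  show "AP (M1 \<Otimes>\<^sub>M M2) (\<lambda>p. Z (fst p) + E p)" unfolding AP_def
  proof
    fix a :: 'v
    show "(\<integral>\<^sup>+p. ennreal ((norm (a + (Z (fst p) + E p)))\<^sup>2) \<partial>(M1 \<Otimes>\<^sub>M M2)) =
     ennreal ((norm a)\<^sup>2) + (\<integral>\<^sup>+p. ennreal ((norm (Z (fst p) + E p))\<^sup>2) \<partial>(M1 \<Otimes>\<^sub>M M2))"
      using key[of a] key[of 0] by (simp add: add.assoc)
  qed
qed

lemma AP_PiM:
  fixes Y :: "nat \<Rightarrow> 's \<Rightarrow> 'v::euclidean_space"
  assumes fin: "finite I" and P: "\<And>i. prob_space (M i)"
    and mY: "\<And>i. i \<in> I \<Longrightarrow> Y i \<in> borel_measurable (M i)"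
    and ap: "\<And>i. i \<in> I \<Longrightarrow> AP (M i) (Y i)"
  shows "(\<integral>\<^sup>+\<xi>. ennreal ((norm (a + (\<Sum>i\<in>I. Y i (\<xi> i))))\<^sup>2) \<partial>PiM I M) =
     ennreal ((norm a)\<^sup>2) + (\<Sum>i\<in>I. \<integral>\<^sup>+z. ennreal ((norm (Y i z))\<^sup>2) \<partial>M i)"
  using fin mY ap
proof (induction I arbitrary: a rule: finite_induct)
  case empty
  then show ?case by (simp add: PiM_empty nn_integral_count_space_finite)
next
  case (insert k I)
  interpret product_prob_space M using P by (simp add: product_prob_space_def product_prob_space_axioms_def product_sigma_finite_def prob_space_imp_sigma_finite)
  have mS: "(\<lambda>\<xi>. \<Sum>i\<in>J. Y i (\<xi> i)) \<in> borel_measurable (PiM J M)" if "J \<subseteq> insert k I" for J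
    using that insert.prems(1)
    by (intro borel_measurable_sum measurable_compose[OF measurable_component_singleton]) auto
  have m: "(\<lambda>\<xi>. ennreal ((norm (a + (\<Sum>i\<in>insert k I. Y i (\<xi> i))))\<^sup>2)) \<in> borel_measurable (PiM (insert k I) M)"
    using mS[of "insert k I"] by measurable
  have "(\<integral>\<^sup>+\<xi>. ennreal ((norm (a + (\<Sum>i\<in>insert k I. Y i (\<xi> i))))\<^sup>2) \<partial>PiM (insert k I) M) =
     (\<integral>\<^sup>+x. \<integral>\<^sup>+y. ennreal ((norm (a + (\<Sum>i\<in>insert k I. Y i ((x(k := y)) i))))\<^sup>2) \<partial>M k \<partial>PiM I M)"
    using insert.hyps by (intro product_nn_integral_insert m) auto
  also have "\<dots> = (\<integral>\<^sup>+x. \<integral>\<^sup>+y. ennreal ((norm ((a + (\<Sum>i\<in>I. Y i (x i))) + Y k y))\<^sup>2) \<partial>M k \<partial>PiM I M)"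
  proof -
    have "\<And>x y. (\<Sum>i\<in>insert k I. Y i ((x(k := y)) i)) = Y k y + (\<Sum>i\<in>I. Y i (x i))"
      using insert.hyps by (simp add: sum.insert) (intro sum.cong, auto)
    then show ?thesis by (simp add: add_ac)
  qed
  also have "\<dots> = (\<integral>\<^sup>+x. ennreal ((norm (a + (\<Sum>i\<in>I. Y i (x i))))\<^sup>2) + (\<integral>\<^sup>+z. ennreal ((norm (Y k z))\<^sup>2) \<partial>M k) \<partial>PiM I M)"
    using insert.prems(2)[of k] unfolding AP_def by simp
  also have "\<dots> = (\<integral>\<^sup>+x. ennreal ((norm (a + (\<Sum>i\<in>I. Y i (x i))))\<^sup>2) \<partial>PiM I M) + (\<integral>\<^sup>+z. ennreal ((norm (Y k z))\<^sup>2) \<partial>M k)"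
  proof -
    interpret PI: finite_product_prob_space M I by standard (use insert.hyps in auto)
    have "(\<lambda>\<xi>. \<Sum>i\<in>I. Y i (\<xi> i)) \<in> borel_measurable (PiM I M)" using mS[of I] by auto
    then have "(\<lambda>x. ennreal ((norm (a + (\<Sum>i\<in>I. Y i (x i))))\<^sup>2)) \<in> borel_measurable (PiM I M)"
      by measurable
    then show ?thesis
      by (subst nn_integral_add) (auto simp: PI.emeasure_space_1)
  qed
  also have "\<dots> = ennreal ((norm a)\<^sup>2) + (\<Sum>i\<in>insert k I. \<integral>\<^sup>+z. ennreal ((norm (Y i z))\<^sup>2) \<partial>M i)"
    using insert by (simp add: add_ac)
  finally show ?case .
qed

lemma gderiv_unique:
  assumes "GDERIV f x :> D1" "GDERIV f x :> D2" shows "D1 = D2"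
proof -
  have "(\<lambda>h. inner h D1) = (\<lambda>h. inner h D2)"
    using assms unfolding gderiv_def by (rule has_derivative_unique)
  then have "inner (D1 - D2) D1 = inner (D1 - D2) D2" by metis
  then have "inner (D1 - D2) (D1 - D2) = 0" by (simp add: inner_diff_right)
  then show ?thesis by simp
qed

lemma quad_grad:
  fixes F :: "real^'n \<Rightarrow> real"
  assumes q: "is_quadratic F A wst" and g: "\<forall>x. GDERIV F x :> gradF x"
  shows "gradF x = A *v (x - wst)"
proof -
  have sym: "transpose A = A" and Fe: "\<And>y. F y = F wst + 1/2 * ((y - wst) \<bullet> (A *v (y - wst)))"
    using q unfolding is_quadratic_def by (auto simp: algebra_simps)
  have d1: "((\<lambda>y. y - wst) has_derivative (\<lambda>h. h)) (at x)"
    using has_derivative_diff[OF has_derivative_ident has_derivative_const] by simp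
  have d2: "((\<lambda>y. A *v (y - wst)) has_derivative (\<lambda>h. A *v h)) (at x)"
    by (rule bounded_linear.has_derivative[OF matrix_vector_mul_bounded_linear d1])
  have d3: "((\<lambda>y. (y - wst) \<bullet> (A *v (y - wst))) has_derivative
    (\<lambda>h. (x - wst) \<bullet> (A *v h) + h \<bullet> (A *v (x - wst)))) (at x)"
    by (rule has_derivative_inner[OF d1 d2])
  have S: "\<And>h. (x - wst) \<bullet> (A *v h) = h \<bullet> (A *v (x - wst))"
  proof -
    fix h
    have "(x - wst) \<bullet> (A *v h) = ((x - wst) v* A) \<bullet> h" by (simp add: dot_lmul_matrix)
    also have "(x - wst) v* A = transpose A *v (x - wst)" by simp
    finally show "(x - wst) \<bullet> (A *v h) = h \<bullet> (A *v (x - wst))" using sym by (simp add: inner_commute)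
  qed
  have d4: "((\<lambda>y. 1/2 * ((y - wst) \<bullet> (A *v (y - wst)))) has_derivative
    (\<lambda>h. h \<bullet> (A *v (x - wst)))) (at x)"
    using has_derivative_mult_right[OF d3, of "1/2"] unfolding S by simp
  have d5: "((\<lambda>y. F wst + 1/2 * ((y - wst) \<bullet> (A *v (y - wst)))) has_derivative
    (\<lambda>h. h \<bullet> (A *v (x - wst)))) (at x)"
    using has_derivative_add[OF has_derivative_const d4] by simp
  have "F = (\<lambda>y. F wst + 1/2 * ((y - wst) \<bullet> (A *v (y - wst))))" using Fe by (rule ext)
  then have "GDERIV F x :> A *v (x - wst)" unfolding gderiv_def using d5 by simp
  then show ?thesis using g gderiv_unique by blast
qed

lemma AP_mean:
  fixes f :: "'s \<Rightarrow> 'v::euclidean_space"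
  assumes P: "prob_space M" and mf: "f \<in> borel_measurable M" and i: "integrable M f"
    and m: "integral\<^sup>L M f = m" and b: "(\<integral>\<^sup>+s. ennreal ((norm (f s - m))\<^sup>2) \<partial>M) \<le> ennreal B"
  shows "AP M (\<lambda>s. f s - m)"
proof -
  interpret prob_space M by (rule P)
  show ?thesis
  proof (rule AP_base[OF P])
    show "(\<lambda>s. f s - m) \<in> borel_measurable M" using mf by measurable
    show "integrable M (\<lambda>s. f s - m)" using i by auto
    show "(\<integral>s. f s - m \<partial>M) = 0" using i m by (subst Bochner_Integration.integral_diff) (auto simp: prob_space)
    show "(\<integral>\<^sup>+s. ennreal ((norm (f s - m))\<^sup>2) \<partial>M) < \<infinity>" 
      by (rule le_less_trans[OF b]) simp
  qed
qed

lemma ro_meas: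
  assumes "random_operator P C" shows "(\<lambda>(s, x). C s x) \<in> borel_measurable (P \<Otimes>\<^sub>M borel)"
  using assms by (simp add: random_operator_def)

lemma EP:
  fixes Cu :: "'u \<Rightarrow> real^'n \<Rightarrow> real^'n" and g :: "'g \<Rightarrow> real^'n \<Rightarrow> real^'n"
  assumes uc: "unbiased_compressor Pu Cu \<omega>" and so: "stoch_oracle Pg g G v"
    and om: "\<omega> \<ge> 0" and v: "v \<ge> 0"
  shows "AP (Pg \<Otimes>\<^sub>M Pu) (\<lambda>p. Cu (snd p) (g (fst p) x) - G x)"
    "(\<integral>\<^sup>+p. ennreal ((norm (Cu (snd p) (g (fst p) x) - G x))\<^sup>2) \<partial>(Pg \<Otimes>\<^sub>M Pu))
       \<le> ennreal (\<omega> * (norm (G x))\<^sup>2 + (1 + \<omega>) * v)"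
proof -
  have mCu[measurable]: "(\<lambda>(s, x). Cu s x) \<in> borel_measurable (Pu \<Otimes>\<^sub>M borel)" and Pu: "prob_space Pu"
    using uc by (auto simp: unbiased_compressor_def random_operator_def)
  have mg[measurable]: "(\<lambda>(s, x). g s x) \<in> borel_measurable (Pg \<Otimes>\<^sub>M borel)" and Pg: "prob_space Pg"
    using so by (auto simp: stoch_oracle_def random_operator_def)
  have ucx: "integrable Pu (\<lambda>s. Cu s y)" "(\<integral>s. Cu s y \<partial>Pu) = y"
     "(\<integral>\<^sup>+s. ennreal ((norm (Cu s y - y))\<^sup>2) \<partial>Pu) \<le> ennreal (\<omega> * (norm y)\<^sup>2)" for y
    using uc by (auto simp: unbiased_compressor_def)
  have sox: "integrable Pg (\<lambda>s. g s x)" "(\<integral>s. g s x \<partial>Pg) = G x"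
     "(\<integral>\<^sup>+s. ennreal ((norm (g s x - G x))\<^sup>2) \<partial>Pg) \<le> ennreal v"
    using so by (auto simp: stoch_oracle_def)
  have apZ: "AP Pg (\<lambda>s. g s x - G x)"
    by (rule AP_mean[OF Pg _ sox(1) sox(2) sox(3)]) measurable
  have apE: "AP Pu (\<lambda>u. Cu u (g s x) - g s x)" for s
    by (rule AP_mean[OF Pu _ ucx(1) ucx(2) ucx(3)]) measurable
  note pr = AP_pair[OF Pg Pu _ _ apZ, of "\<lambda>p. Cu (snd p) (g (fst p) x) - g (fst p) x"]
  have eqf: "(\<lambda>p. g (fst p) x - G x + (Cu (snd p) (g (fst p) x) - g (fst p) x)) = (\<lambda>p. Cu (snd p) (g (fst p) x) - G x)"
    by auto
  have pr1: "AP (Pg \<Otimes>\<^sub>M Pu) (\<lambda>p. Cu (snd p) (g (fst p) x) - G x)"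
    and pr2: "(\<integral>\<^sup>+p. ennreal ((norm (Cu (snd p) (g (fst p) x) - G x))\<^sup>2) \<partial>(Pg \<Otimes>\<^sub>M Pu)) =
     (\<integral>\<^sup>+d. ennreal ((norm (g d x - G x))\<^sup>2) \<partial>Pg) + (\<integral>\<^sup>+d. \<integral>\<^sup>+e. ennreal ((norm (Cu e (g d x) - g d x))\<^sup>2) \<partial>Pu \<partial>Pg)"
    using pr[unfolded eqf] apE by auto
  show "AP (Pg \<Otimes>\<^sub>M Pu) (\<lambda>p. Cu (snd p) (g (fst p) x) - G x)" by (rule pr1)
  have "(\<integral>\<^sup>+d. \<integral>\<^sup>+e. ennreal ((norm (Cu e (g d x) - g d x))\<^sup>2) \<partial>Pu \<partial>Pg)
      \<le> (\<integral>\<^sup>+d. ennreal \<omega> * ennreal ((norm (g d x))\<^sup>2) \<partial>Pg)"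
  proof (intro nn_integral_mono)
    fix d
    have "ennreal (\<omega> * (norm (g d x))\<^sup>2) = ennreal \<omega> * ennreal ((norm (g d x))\<^sup>2)"
      using om by (intro ennreal_mult) auto
    then show "(\<integral>\<^sup>+e. ennreal ((norm (Cu e (g d x) - g d x))\<^sup>2) \<partial>Pu) \<le> ennreal \<omega> * ennreal ((norm (g d x))\<^sup>2)"
      using ucx(3)[of "g d x"] by simp
  qed
  also have "\<dots> = ennreal \<omega> * (\<integral>\<^sup>+d. ennreal ((norm (g d x))\<^sup>2) \<partial>Pg)"
    by (intro nn_integral_cmult) measurable
  also have "(\<integral>\<^sup>+d. ennreal ((norm (g d x))\<^sup>2) \<partial>Pg) = ennreal ((norm (G x))\<^sup>2) + (\<integral>\<^sup>+s. ennreal ((norm (g s x - G x))\<^sup>2) \<partial>Pg)"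
  proof -
    have "(\<integral>\<^sup>+s. ennreal ((norm (G x + (g s x - G x)))\<^sup>2) \<partial>Pg) = ennreal ((norm (G x))\<^sup>2) + (\<integral>\<^sup>+s. ennreal ((norm (g s x - G x))\<^sup>2) \<partial>Pg)"
      using apZ unfolding AP_def by blast
    then show ?thesis by simp
  qed
  also have "\<dots> \<le> ennreal ((norm (G x))\<^sup>2) + ennreal v" using sox(3) by (rule add_left_mono)
  finally have b2: "(\<integral>\<^sup>+d. \<integral>\<^sup>+e. ennreal ((norm (Cu e (g d x) - g d x))\<^sup>2) \<partial>Pu \<partial>Pg)
      \<le> ennreal \<omega> * (ennreal ((norm (G x))\<^sup>2) + ennreal v)"
    by (rule order_trans) (rule mult_left_mono, auto)
  have "(\<integral>\<^sup>+p. ennreal ((norm (Cu (snd p) (g (fst p) x) - G x))\<^sup>2) \<partial>(Pg \<Otimes>\<^sub>M Pu))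
       \<le> ennreal v + ennreal \<omega> * (ennreal ((norm (G x))\<^sup>2) + ennreal v)"
    unfolding pr2 using sox(3) b2 by (rule add_mono)
  also have "\<dots> = ennreal (\<omega> * (norm (G x))\<^sup>2 + (1 + \<omega>) * v)"
  proof -
    have "ennreal (\<omega> * (norm (G x))\<^sup>2 + (1 + \<omega>) * v) = ennreal (v + \<omega> * ((norm (G x))\<^sup>2 + v))"
      by (simp add: algebra_simps)
    also have "\<dots> = ennreal v + ennreal (\<omega> * ((norm (G x))\<^sup>2 + v))"
      using om v by (intro ennreal_plus) auto
    also have "ennreal (\<omega> * ((norm (G x))\<^sup>2 + v)) = ennreal \<omega> * ennreal ((norm (G x))\<^sup>2 + v)"
      using om v by (intro ennreal_mult) auto
    also have "ennreal ((norm (G x))\<^sup>2 + v) = ennreal ((norm (G x))\<^sup>2) + ennreal v"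
      using v by (intro ennreal_plus) auto
    finally show ?thesis by simp
  qed
  finally show "(\<integral>\<^sup>+p. ennreal ((norm (Cu (snd p) (g (fst p) x) - G x))\<^sup>2) \<partial>(Pg \<Otimes>\<^sub>M Pu))
       \<le> ennreal (\<omega> * (norm (G x))\<^sup>2 + (1 + \<omega>) * v)" .
qed

lemma mvm_meas[measurable]: "(\<lambda>x. (A::real^'n^'m) *v x) \<in> borel_measurable borel"
  by (intro borel_measurable_continuous_onI matrix_vector_mult_linear_continuous_on)

lemma GD:
  fixes Cd :: "'d \<Rightarrow> real^'n \<Rightarrow> real^'n" and A :: "real^'n^'n"
  assumes uc: "unbiased_compressor Pd Cd \<omega>" and om: "\<omega> \<ge> 0"
    and gl: "\<And>x. gradF x = A *v (x - wst)" and bnd: "\<And>v. norm (A *v v) \<le> L * norm v"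
  shows "AP Pd (\<lambda>d. gradF (H + Cd d (w - H)) - gradF w)"
    "(\<integral>\<^sup>+d. ennreal ((norm (gradF (H + Cd d (w - H)) - gradF w))\<^sup>2) \<partial>Pd) \<le> ennreal (L\<^sup>2 * \<omega> * (norm (w - H))\<^sup>2)"
    "(\<integral>\<^sup>+d. ennreal ((norm (gradF (H + Cd d (w - H))))\<^sup>2) \<partial>Pd) \<le> ennreal ((norm (gradF w))\<^sup>2 + L\<^sup>2 * \<omega> * (norm (w - H))\<^sup>2)"
proof -
  define \<Delta> where "\<Delta> = w - H"
  have mC[measurable]: "(\<lambda>(s, x). Cd s x) \<in> borel_measurable (Pd \<Otimes>\<^sub>M borel)" and P: "prob_space Pd"
    using uc by (auto simp: unbiased_compressor_def random_operator_def)
  interpret prob_space Pd by (rule P)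
  have ucx: "integrable Pd (\<lambda>s. Cd s \<Delta>)" "(\<integral>s. Cd s \<Delta> \<partial>Pd) = \<Delta>"
     "(\<integral>\<^sup>+s. ennreal ((norm (Cd s \<Delta> - \<Delta>))\<^sup>2) \<partial>Pd) \<le> ennreal (\<omega> * (norm \<Delta>)\<^sup>2)"
    using uc by (auto simp: unbiased_compressor_def)
  have eq: "gradF (H + Cd d (w - H)) - gradF w = A *v (Cd d \<Delta> - \<Delta>)" for d
  proof -
    have "(H + Cd d \<Delta> - wst) - (w - wst) = Cd d \<Delta> - \<Delta>" unfolding \<Delta>_def by (simp add: algebra_simps)
    have "gradF (H + Cd d (w - H)) - gradF w = A *v (H + Cd d \<Delta> - wst) - A *v (w - wst)"
      unfolding gl \<Delta>_def by simp
    also have "\<dots> = A *v ((H + Cd d \<Delta> - wst) - (w - wst))" by (simp only: matrix_vector_mult_diff_distrib)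
    finally show ?thesis using \<open>(H + Cd d \<Delta> - wst) - (w - wst) = Cd d \<Delta> - \<Delta>\<close> by simp
  qed
  have bl: "bounded_linear (\<lambda>x. A *v x)" by simp
  have intd: "integrable Pd (\<lambda>s. Cd s \<Delta> - \<Delta>)" using ucx(1) by auto
  have b1: "(\<integral>\<^sup>+d. ennreal ((norm (A *v (Cd d \<Delta> - \<Delta>)))\<^sup>2) \<partial>Pd) \<le> ennreal (L\<^sup>2 * \<omega> * (norm \<Delta>)\<^sup>2)"
  proof -
    have "(\<integral>\<^sup>+d. ennreal ((norm (A *v (Cd d \<Delta> - \<Delta>)))\<^sup>2) \<partial>Pd) \<le> (\<integral>\<^sup>+d. ennreal (L\<^sup>2) * ennreal ((norm (Cd d \<Delta> - \<Delta>))\<^sup>2) \<partial>Pd)"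
    proof (intro nn_integral_mono)
      fix d
      have "(norm (A *v (Cd d \<Delta> - \<Delta>)))\<^sup>2 \<le> (L * norm (Cd d \<Delta> - \<Delta>))\<^sup>2"
        by (intro power_mono bnd) auto
      then have "ennreal ((norm (A *v (Cd d \<Delta> - \<Delta>)))\<^sup>2) \<le> ennreal (L\<^sup>2 * (norm (Cd d \<Delta> - \<Delta>))\<^sup>2)"
        by (simp add: power_mult_distrib)
      also have "\<dots> = ennreal (L\<^sup>2) * ennreal ((norm (Cd d \<Delta> - \<Delta>))\<^sup>2)" by (intro ennreal_mult) auto
      finally show "ennreal ((norm (A *v (Cd d \<Delta> - \<Delta>)))\<^sup>2) \<le> ennreal (L\<^sup>2) * ennreal ((norm (Cd d \<Delta> - \<Delta>))\<^sup>2)" .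
    qed
    also have "\<dots> = ennreal (L\<^sup>2) * (\<integral>\<^sup>+d. ennreal ((norm (Cd d \<Delta> - \<Delta>))\<^sup>2) \<partial>Pd)"
      by (intro nn_integral_cmult) measurable
    also have "\<dots> \<le> ennreal (L\<^sup>2) * ennreal (\<omega> * (norm \<Delta>)\<^sup>2)" using ucx(3) by (rule mult_left_mono) auto
    also have "\<dots> = ennreal (L\<^sup>2 * \<omega> * (norm \<Delta>)\<^sup>2)" using om by (simp add: ennreal_mult mult.assoc)
    finally show ?thesis .
  qed
  have ap: "AP Pd (\<lambda>d. A *v (Cd d \<Delta> - \<Delta>))"
  proof (rule AP_base[OF P])
    show "(\<lambda>d. A *v (Cd d \<Delta> - \<Delta>)) \<in> borel_measurable Pd" by measurable
    show "integrable Pd (\<lambda>d. A *v (Cd d \<Delta> - \<Delta>))" by (rule integrable_bounded_linear[OF bl intd])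
    have "(\<integral>d. A *v (Cd d \<Delta> - \<Delta>) \<partial>Pd) = A *v (\<integral>d. Cd d \<Delta> - \<Delta> \<partial>Pd)"
      by (rule integral_bounded_linear[OF bl intd])
    also have "(\<integral>d. Cd d \<Delta> - \<Delta> \<partial>Pd) = 0" using ucx(1,2) by (subst Bochner_Integration.integral_diff) (auto simp: prob_space)
    finally show "(\<integral>d. A *v (Cd d \<Delta> - \<Delta>) \<partial>Pd) = 0" by simp
    show "(\<integral>\<^sup>+d. ennreal ((norm (A *v (Cd d \<Delta> - \<Delta>)))\<^sup>2) \<partial>Pd) < \<infinity>"
      by (rule le_less_trans[OF b1]) simp
  qed
  show "AP Pd (\<lambda>d. gradF (H + Cd d (w - H)) - gradF w)" unfolding eq by (rule ap)
  show b2: "(\<integral>\<^sup>+d. ennreal ((norm (gradF (H + Cd d (w - H)) - gradF w))\<^sup>2) \<partial>Pd) \<le> ennreal (L\<^sup>2 * \<omega> * (norm (w - H))\<^sup>2)"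
    unfolding eq using b1 by (simp add: \<Delta>_def)
  have "(\<integral>\<^sup>+d. ennreal ((norm (gradF w + (gradF (H + Cd d (w - H)) - gradF w)))\<^sup>2) \<partial>Pd)
     = ennreal ((norm (gradF w))\<^sup>2) + (\<integral>\<^sup>+d. ennreal ((norm (gradF (H + Cd d (w - H)) - gradF w))\<^sup>2) \<partial>Pd)"
    using ap[folded eq] unfolding AP_def by blast
  also have "\<dots> \<le> ennreal ((norm (gradF w))\<^sup>2) + ennreal (L\<^sup>2 * \<omega> * (norm (w - H))\<^sup>2)"
    using b2 by (rule add_left_mono)
  also have "\<dots> = ennreal ((norm (gradF w))\<^sup>2 + L\<^sup>2 * \<omega> * (norm (w - H))\<^sup>2)"
    using om by (intro ennreal_plus[symmetric]) auto
  finally show "(\<integral>\<^sup>+d. ennreal ((norm (gradF (H + Cd d (w - H))))\<^sup>2) \<partial>Pd) \<le> ennreal ((norm (gradF w))\<^sup>2 + L\<^sup>2 * \<omega> * (norm (w - H))\<^sup>2)"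
    by simp
qed

lemma nn_scale:
  fixes Y :: "'s \<Rightarrow> 'v::euclidean_space"
  assumes "Y \<in> borel_measurable M"
  shows "(\<integral>\<^sup>+z. ennreal ((norm (c *\<^sub>R Y z))\<^sup>2) \<partial>M) = ennreal (c\<^sup>2) * (\<integral>\<^sup>+z. ennreal ((norm (Y z))\<^sup>2) \<partial>M)"
proof -
  have "(\<integral>\<^sup>+z. ennreal ((norm (c *\<^sub>R Y z))\<^sup>2) \<partial>M) = (\<integral>\<^sup>+z. ennreal (c\<^sup>2) * ennreal ((norm (Y z))\<^sup>2) \<partial>M)"
    by (intro nn_integral_cong) (simp add: power_mult_distrib ennreal_mult)
  also have "\<dots> = ennreal (c\<^sup>2) * (\<integral>\<^sup>+z. ennreal ((norm (Y z))\<^sup>2) \<partial>M)"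
    using assms by (intro nn_integral_cmult) measurable
  finally show ?thesis .
qed

lemma nn_lin:
  assumes P: "prob_space M" and mf: "f \<in> borel_measurable M" and f0: "\<And>x. f x \<ge> 0"
    and a: "a \<ge> 0" and b: "b \<ge> 0" and B: "B \<ge> 0"
    and le: "(\<integral>\<^sup>+x. ennreal (f x) \<partial>M) \<le> ennreal B"
  shows "(\<integral>\<^sup>+x. ennreal (a * f x + b) \<partial>M) \<le> ennreal (a * B + b)"
proof -
  interpret prob_space M by (rule P)
  have "(\<integral>\<^sup>+x. ennreal (a * f x + b) \<partial>M) = (\<integral>\<^sup>+x. ennreal a * ennreal (f x) + ennreal b \<partial>M)"
    using a b f0 by (intro nn_integral_cong) (simp add: ennreal_mult ennreal_plus)
  also have "\<dots> = (\<integral>\<^sup>+x. ennreal a * ennreal (f x) \<partial>M) + (\<integral>\<^sup>+x. ennreal b \<partial>M)"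
    using mf by (intro nn_integral_add) auto
  also have "(\<integral>\<^sup>+x. ennreal a * ennreal (f x) \<partial>M) = ennreal a * (\<integral>\<^sup>+x. ennreal (f x) \<partial>M)"
    using mf by (intro nn_integral_cmult) auto
  also have "(\<integral>\<^sup>+x. ennreal b \<partial>M) = ennreal b" by (simp add: emeasure_space_1)
  also have "ennreal a * (\<integral>\<^sup>+x. ennreal (f x) \<partial>M) + ennreal b \<le> ennreal a * ennreal B + ennreal b"
    using le by (intro add_right_mono mult_left_mono) auto
  also have "\<dots> = ennreal (a * B + b)" using a b B by (simp add: ennreal_mult ennreal_plus)
  finally show ?thesis .
qed

lemma TC:
  fixes Cu :: "'u \<Rightarrow> real^'n \<Rightarrow> real^'n" and g :: "'g \<Rightarrow> real^'n \<Rightarrow> real^'n"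
  assumes uc: "unbiased_compressor Pu Cu \<omega>" and so: "stoch_oracle Pg g G v"
    and om: "\<omega> \<ge> 0" and v: "v \<ge> 0"
  shows "AP (Pg \<Otimes>\<^sub>M Pu) (\<lambda>p. c *\<^sub>R (Cu (snd p) (g (fst p) x) - G x))"
    "(\<integral>\<^sup>+p. ennreal ((norm (c *\<^sub>R (Cu (snd p) (g (fst p) x) - G x)))\<^sup>2) \<partial>(Pg \<Otimes>\<^sub>M Pu))
       \<le> ennreal (c\<^sup>2 * (\<omega> * (norm (G x))\<^sup>2 + (1 + \<omega>) * v))"
proof -
  have mCu[measurable]: "(\<lambda>(s, x). Cu s x) \<in> borel_measurable (Pu \<Otimes>\<^sub>M borel)" and Pu: "prob_space Pu"
    using uc by (auto simp: unbiased_compressor_def random_operator_def)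
  have mg[measurable]: "(\<lambda>(s, x). g s x) \<in> borel_measurable (Pg \<Otimes>\<^sub>M borel)" and Pg: "prob_space Pg"
    using so by (auto simp: stoch_oracle_def random_operator_def)
  have m: "(\<lambda>p. Cu (snd p) (g (fst p) x) - G x) \<in> borel_measurable (Pg \<Otimes>\<^sub>M Pu)" by measurable
  have P: "prob_space (Pg \<Otimes>\<^sub>M Pu)" using Pg Pu by (simp add: prob_space_pair)
  show "AP (Pg \<Otimes>\<^sub>M Pu) (\<lambda>p. c *\<^sub>R (Cu (snd p) (g (fst p) x) - G x))"
    by (rule AP_scale[OF EP(1)[OF uc so om v] m P])
  have "(\<integral>\<^sup>+p. ennreal ((norm (c *\<^sub>R (Cu (snd p) (g (fst p) x) - G x)))\<^sup>2) \<partial>(Pg \<Otimes>\<^sub>M Pu))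
     = ennreal (c\<^sup>2) * (\<integral>\<^sup>+p. ennreal ((norm (Cu (snd p) (g (fst p) x) - G x))\<^sup>2) \<partial>(Pg \<Otimes>\<^sub>M Pu))"
    by (rule nn_scale[OF m])
  also have "\<dots> \<le> ennreal (c\<^sup>2) * ennreal (\<omega> * (norm (G x))\<^sup>2 + (1 + \<omega>) * v)"
    by (intro mult_left_mono EP(2)[OF uc so om v]) auto
  also have "\<dots> = ennreal (c\<^sup>2 * (\<omega> * (norm (G x))\<^sup>2 + (1 + \<omega>) * v))"
    using om v by (simp add: ennreal_mult)
  finally show "(\<integral>\<^sup>+p. ennreal ((norm (c *\<^sub>R (Cu (snd p) (g (fst p) x) - G x)))\<^sup>2) \<partial>(Pg \<Otimes>\<^sub>M Pu))
       \<le> ennreal (c\<^sup>2 * (\<omega> * (norm (G x))\<^sup>2 + (1 + \<omega>) * v))" .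
qed

lemma gradF_meas:
  fixes A :: "real^'n^'n"
  assumes gl: "\<And>x. gradF x = A *v (x - wst)" shows "gradF \<in> borel_measurable borel"
proof -
  have "gradF = (\<lambda>x. A *v (x - wst))" using gl by (rule ext)
  then show ?thesis by simp
qed

lemma RC:
  fixes Cd :: "'d \<Rightarrow> real^'n \<Rightarrow> real^'n" and Cu :: "'u \<Rightarrow> real^'n \<Rightarrow> real^'n"
    and g :: "'g \<Rightarrow> real^'n \<Rightarrow> real^'n" and A :: "real^'n^'n"
  assumes ucd: "unbiased_compressor Pd Cd \<omega>d" and ucu: "unbiased_compressor Pu Cu \<omega>u"
    and so: "stoch_oracle Pg g gradF v"
    and omd: "\<omega>d \<ge> 0" and omu: "\<omega>u \<ge> 0" and v: "v \<ge> 0"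
    and gl: "\<And>x. gradF x = A *v (x - wst)" and bnd: "\<And>v. norm (A *v v) \<le> L * norm v"
  shows "AP (Pd \<Otimes>\<^sub>M (Pg \<Otimes>\<^sub>M Pu)) (\<lambda>z. c *\<^sub>R (\<kappa> *\<^sub>R (gradF (H + Cd (fst z) (w - H)) - gradF w) +
            (Cu (snd (snd z)) (g (fst (snd z)) (H + Cd (fst z) (w - H))) - gradF (H + Cd (fst z) (w - H)))))"
    "(\<lambda>z. c *\<^sub>R (\<kappa> *\<^sub>R (gradF (H + Cd (fst z) (w - H)) - gradF w) +
            (Cu (snd (snd z)) (g (fst (snd z)) (H + Cd (fst z) (w - H))) - gradF (H + Cd (fst z) (w - H)))))
       \<in> borel_measurable (Pd \<Otimes>\<^sub>M (Pg \<Otimes>\<^sub>M Pu))"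
    "(\<integral>\<^sup>+z. ennreal ((norm (c *\<^sub>R (\<kappa> *\<^sub>R (gradF (H + Cd (fst z) (w - H)) - gradF w) +
            (Cu (snd (snd z)) (g (fst (snd z)) (H + Cd (fst z) (w - H))) - gradF (H + Cd (fst z) (w - H))))))\<^sup>2)
        \<partial>(Pd \<Otimes>\<^sub>M (Pg \<Otimes>\<^sub>M Pu)))
     \<le> ennreal (c\<^sup>2 * (\<kappa>\<^sup>2 * (L\<^sup>2 * \<omega>d * (norm (w - H))\<^sup>2) +
          (\<omega>u * ((norm (gradF w))\<^sup>2 + L\<^sup>2 * \<omega>d * (norm (w - H))\<^sup>2) + (1 + \<omega>u) * v)))"
proof -
  have mCu[measurable]: "(\<lambda>(s, x). Cu s x) \<in> borel_measurable (Pu \<Otimes>\<^sub>M borel)" and Pu: "prob_space Pu"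
    using ucu by (auto simp: unbiased_compressor_def random_operator_def)
  have mCd[measurable]: "(\<lambda>(s, x). Cd s x) \<in> borel_measurable (Pd \<Otimes>\<^sub>M borel)" and Pd: "prob_space Pd"
    using ucd by (auto simp: unbiased_compressor_def random_operator_def)
  have mg[measurable]: "(\<lambda>(s, x). g s x) \<in> borel_measurable (Pg \<Otimes>\<^sub>M borel)" and Pg: "prob_space Pg"
    using so by (auto simp: stoch_oracle_def random_operator_def)
  have mG[measurable]: "gradF \<in> borel_measurable borel" by (rule gradF_meas[OF gl])
  have PQ: "prob_space (Pg \<Otimes>\<^sub>M Pu)" using Pg Pu by (simp add: prob_space_pair)
  have PP: "prob_space (Pd \<Otimes>\<^sub>M (Pg \<Otimes>\<^sub>M Pu))" using Pd PQ by (simp add: prob_space_pair)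
  define xx where "xx d = H + Cd d (w - H)" for d
  have mxx[measurable]: "xx \<in> borel_measurable Pd" unfolding xx_def by measurable
  define Z where "Z d = \<kappa> *\<^sub>R (gradF (xx d) - gradF w)" for d
  define E where "E z = Cu (snd (snd z)) (g (fst (snd z)) (xx (fst z))) - gradF (xx (fst z))" for z
  have mZ[measurable]: "Z \<in> borel_measurable Pd" unfolding Z_def by measurable
  have mE[measurable]: "E \<in> borel_measurable (Pd \<Otimes>\<^sub>M (Pg \<Otimes>\<^sub>M Pu))" unfolding E_def by measurable
  have m0: "(\<lambda>d. gradF (xx d) - gradF w) \<in> borel_measurable Pd" by measurable
  have apZ: "AP Pd Z" unfolding Z_def xx_def
    by (rule AP_scale[OF GD(1)[OF ucd omd gl bnd] m0[unfolded xx_def] Pd])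
  have apE: "AP (Pg \<Otimes>\<^sub>M Pu) (\<lambda>p. E (d, p))" for d
    unfolding E_def using EP(1)[OF ucu so omu v, of "xx d"] by simp
  note pr = AP_pair[OF Pd PQ mZ mE apZ apE]
  have eqY: "(\<lambda>z. c *\<^sub>R (\<kappa> *\<^sub>R (gradF (H + Cd (fst z) (w - H)) - gradF w) +
            (Cu (snd (snd z)) (g (fst (snd z)) (H + Cd (fst z) (w - H))) - gradF (H + Cd (fst z) (w - H)))))
      = (\<lambda>z. c *\<^sub>R (Z (fst z) + E z))"
    by (simp add: Z_def E_def xx_def)
  have mY: "(\<lambda>z. Z (fst z) + E z) \<in> borel_measurable (Pd \<Otimes>\<^sub>M (Pg \<Otimes>\<^sub>M Pu))" by measurable
  show "AP (Pd \<Otimes>\<^sub>M (Pg \<Otimes>\<^sub>M Pu)) (\<lambda>z. c *\<^sub>R (\<kappa> *\<^sub>R (gradF (H + Cd (fst z) (w - H)) - gradF w) +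
            (Cu (snd (snd z)) (g (fst (snd z)) (H + Cd (fst z) (w - H))) - gradF (H + Cd (fst z) (w - H)))))"
    unfolding eqY by (rule AP_scale[OF pr(1) mY PP])
  show "(\<lambda>z. c *\<^sub>R (\<kappa> *\<^sub>R (gradF (H + Cd (fst z) (w - H)) - gradF w) +
            (Cu (snd (snd z)) (g (fst (snd z)) (H + Cd (fst z) (w - H))) - gradF (H + Cd (fst z) (w - H)))))
       \<in> borel_measurable (Pd \<Otimes>\<^sub>M (Pg \<Otimes>\<^sub>M Pu))"
    unfolding eqY by measurable
  define \<Delta>2 where "\<Delta>2 = (norm (w - H))\<^sup>2"
  have bZ: "(\<integral>\<^sup>+d. ennreal ((norm (Z d))\<^sup>2) \<partial>Pd) \<le> ennreal (\<kappa>\<^sup>2 * (L\<^sup>2 * \<omega>d * \<Delta>2))"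
  proof -
    have "(\<integral>\<^sup>+d. ennreal ((norm (Z d))\<^sup>2) \<partial>Pd) = ennreal (\<kappa>\<^sup>2) * (\<integral>\<^sup>+d. ennreal ((norm (gradF (xx d) - gradF w))\<^sup>2) \<partial>Pd)"
      unfolding Z_def by (rule nn_scale[OF m0])
    also have "\<dots> \<le> ennreal (\<kappa>\<^sup>2) * ennreal (L\<^sup>2 * \<omega>d * \<Delta>2)"
      unfolding xx_def \<Delta>2_def by (intro mult_left_mono GD(2)[OF ucd omd gl bnd]) auto
    also have "\<dots> = ennreal (\<kappa>\<^sup>2 * (L\<^sup>2 * \<omega>d * \<Delta>2))" using omd by (simp add: ennreal_mult \<Delta>2_def)
    finally show ?thesis .
  qed
  have bE: "(\<integral>\<^sup>+d. \<integral>\<^sup>+p. ennreal ((norm (E (d, p)))\<^sup>2) \<partial>(Pg \<Otimes>\<^sub>M Pu) \<partial>Pd)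
      \<le> ennreal (\<omega>u * ((norm (gradF w))\<^sup>2 + L\<^sup>2 * \<omega>d * \<Delta>2) + (1 + \<omega>u) * v)"
  proof -
    have "(\<integral>\<^sup>+d. \<integral>\<^sup>+p. ennreal ((norm (E (d, p)))\<^sup>2) \<partial>(Pg \<Otimes>\<^sub>M Pu) \<partial>Pd)
       \<le> (\<integral>\<^sup>+d. ennreal (\<omega>u * (norm (gradF (xx d)))\<^sup>2 + (1 + \<omega>u) * v) \<partial>Pd)"
      unfolding E_def using EP(2)[OF ucu so omu v] by (intro nn_integral_mono) simp
    also have "\<dots> \<le> ennreal (\<omega>u * ((norm (gradF w))\<^sup>2 + L\<^sup>2 * \<omega>d * \<Delta>2) + (1 + \<omega>u) * v)"
    proof -
      have m1: "(\<lambda>x. (norm (gradF (H + Cd x (w - H))))\<^sup>2) \<in> borel_measurable Pd" by measurable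
      show ?thesis
        using omu v omd m1 unfolding xx_def \<Delta>2_def
        by (intro nn_lin[OF Pd] GD(3)[OF ucd omd gl bnd]) (auto intro!: add_nonneg_nonneg mult_nonneg_nonneg)
    qed
    finally show ?thesis .
  qed
  have "(\<integral>\<^sup>+z. ennreal ((norm (c *\<^sub>R (Z (fst z) + E z)))\<^sup>2) \<partial>(Pd \<Otimes>\<^sub>M (Pg \<Otimes>\<^sub>M Pu)))
     = ennreal (c\<^sup>2) * ((\<integral>\<^sup>+d. ennreal ((norm (Z d))\<^sup>2) \<partial>Pd) + (\<integral>\<^sup>+d. \<integral>\<^sup>+p. ennreal ((norm (E (d, p)))\<^sup>2) \<partial>(Pg \<Otimes>\<^sub>M Pu) \<partial>Pd))"
    unfolding nn_scale[OF mY] pr(2) ..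
  also have "\<dots> \<le> ennreal (c\<^sup>2) * (ennreal (\<kappa>\<^sup>2 * (L\<^sup>2 * \<omega>d * \<Delta>2)) + ennreal (\<omega>u * ((norm (gradF w))\<^sup>2 + L\<^sup>2 * \<omega>d * \<Delta>2) + (1 + \<omega>u) * v))"
    by (intro mult_left_mono add_mono bZ bE) auto
  also have "\<dots> = ennreal (c\<^sup>2 * (\<kappa>\<^sup>2 * (L\<^sup>2 * \<omega>d * \<Delta>2) + (\<omega>u * ((norm (gradF w))\<^sup>2 + L\<^sup>2 * \<omega>d * \<Delta>2) + (1 + \<omega>u) * v)))"
    using omd omu v by (simp add: ennreal_mult ennreal_plus \<Delta>2_def)
  finally have fin: "(\<integral>\<^sup>+z. ennreal ((norm (c *\<^sub>R (Z (fst z) + E z)))\<^sup>2) \<partial>(Pd \<Otimes>\<^sub>M (Pg \<Otimes>\<^sub>M Pu)))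
    \<le> ennreal (c\<^sup>2 * (\<kappa>\<^sup>2 * (L\<^sup>2 * \<omega>d * \<Delta>2) + (\<omega>u * ((norm (gradF w))\<^sup>2 + L\<^sup>2 * \<omega>d * \<Delta>2) + (1 + \<omega>u) * v)))" .
  have eqY': "\<And>z. c *\<^sub>R (\<kappa> *\<^sub>R (gradF (H + Cd (fst z) (w - H)) - gradF w) +
            (Cu (snd (snd z)) (g (fst (snd z)) (H + Cd (fst z) (w - H))) - gradF (H + Cd (fst z) (w - H))))
      = c *\<^sub>R (Z (fst z) + E z)"
    by (simp add: Z_def E_def xx_def)
  show "(\<integral>\<^sup>+z. ennreal ((norm (c *\<^sub>R (\<kappa> *\<^sub>R (gradF (H + Cd (fst z) (w - H)) - gradF w) +
            (Cu (snd (snd z)) (g (fst (snd z)) (H + Cd (fst z) (w - H))) - gradF (H + Cd (fst z) (w - H))))))\<^sup>2)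
        \<partial>(Pd \<Otimes>\<^sub>M (Pg \<Otimes>\<^sub>M Pu)))
     \<le> ennreal (c\<^sup>2 * (\<kappa>\<^sup>2 * (L\<^sup>2 * \<omega>d * (norm (w - H))\<^sup>2) +
          (\<omega>u * ((norm (gradF w))\<^sup>2 + L\<^sup>2 * \<omega>d * (norm (w - H))\<^sup>2) + (1 + \<omega>u) * v)))"
    using fin by (simp only: eqY' \<Delta>2_def)
qed

lemma real_eq_rand:
  fixes N :: nat and \<delta> :: "nat \<Rightarrow> real"
  assumes N1: "N \<ge> 1"
  shows "\<kappa>\<^sup>2 * G + (\<Sum>i<N. (1 / real N)\<^sup>2 * (\<kappa>\<^sup>2 * (L\<^sup>2 * \<omega>d * \<delta> i) + (\<omega>u * (G + L\<^sup>2 * \<omega>d * \<delta> i) + (1 + \<omega>u) * v)))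
    = (\<kappa>\<^sup>2 + \<omega>u / real N) * G + (1 + \<omega>u) * v / real N + L\<^sup>2 * \<omega>d * (\<kappa>\<^sup>2 / real N + \<omega>u / real N) * ((1 / real N) * (\<Sum>i<N. \<delta> i))"
proof -
  have "(\<Sum>i<N. (1 / real N)\<^sup>2 * (\<kappa>\<^sup>2 * (L\<^sup>2 * \<omega>d * \<delta> i) + (\<omega>u * (G + L\<^sup>2 * \<omega>d * \<delta> i) + (1 + \<omega>u) * v)))
      = (\<Sum>i<N. ((1 / real N)\<^sup>2 * ((\<kappa>\<^sup>2 + \<omega>u) * L\<^sup>2 * \<omega>d)) * \<delta> i + (1 / real N)\<^sup>2 * (\<omega>u * G + (1 + \<omega>u) * v))"
    by (intro sum.cong) (auto simp: algebra_simps)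
  also have "\<dots> = (1 / real N)\<^sup>2 * ((\<kappa>\<^sup>2 + \<omega>u) * L\<^sup>2 * \<omega>d) * (\<Sum>i<N. \<delta> i) + real N * ((1 / real N)\<^sup>2 * (\<omega>u * G + (1 + \<omega>u) * v))"
    by (simp add: sum.distrib sum_distrib_left)
  finally show ?thesis using N1 by (simp add: field_simps power2_eq_square)
qed

lemma rand_case:
  fixes gradF :: "real^'n \<Rightarrow> real^'n" and A :: "real^'n^'n"
    and Pd :: "nat \<Rightarrow> 'd measure" and Cd :: "nat \<Rightarrow> 'd \<Rightarrow> real^'n \<Rightarrow> real^'n"
    and Pg :: "nat \<Rightarrow> 'g measure" and g :: "nat \<Rightarrow> 'g \<Rightarrow> real^'n \<Rightarrow> real^'n"
    and Pu :: "nat \<Rightarrow> 'u measure" and Cu :: "nat \<Rightarrow> 'u \<Rightarrow> real^'n \<Rightarrow> real^'n"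
    and w :: "real^'n" and H :: "nat \<Rightarrow> real^'n" and N :: nat
  assumes N1: "N \<ge> 1"
    and ucd: "\<forall>i<N. unbiased_compressor (Pd i) (Cd i) \<omega>d"
    and ucu: "\<forall>i<N. unbiased_compressor (Pu i) (Cu i) \<omega>u"
    and so: "\<forall>i<N. stoch_oracle (Pg i) (g i) gradF v"
    and omd: "\<omega>d \<ge> 0" and omu: "\<omega>u \<ge> 0" and v: "v \<ge> 0"
    and gl: "\<And>x. gradF x = A *v (x - wst)" and bnd: "\<And>v. norm (A *v v) \<le> L * norm v"
  shows "(\<integral>\<^sup>+\<xi>. ennreal ((norm ((1 / real N) *\<^sub>R (\<Sum>i<N.
            Cu i (snd (snd (\<xi> i))) (g i (fst (snd (\<xi> i))) (H i + Cd i (fst (\<xi> i)) (w - H i)))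
            - (1 - \<kappa>) *\<^sub>R gradF (H i + Cd i (fst (\<xi> i)) (w - H i)))))\<^sup>2)
         \<partial>PiM {..<N} (\<lambda>i. Pd i \<Otimes>\<^sub>M Pg i \<Otimes>\<^sub>M Pu i))
    \<le> ennreal ((\<kappa>\<^sup>2 + \<omega>u / real N) * (norm (gradF w))\<^sup>2 + (1 + \<omega>u) * v / real N
        + L\<^sup>2 * \<omega>d * (\<kappa>\<^sup>2 / real N + \<omega>u / real N) * ((1 / real N) * (\<Sum>i<N. (norm (w - H i))\<^sup>2)))"
proof -
  define M' where "M' i = (if i < N then Pd i \<Otimes>\<^sub>M (Pg i \<Otimes>\<^sub>M Pu i) else return (count_space UNIV) undefined)" for i
  have PiM_eq: "PiM {..<N} (\<lambda>i. Pd i \<Otimes>\<^sub>M Pg i \<Otimes>\<^sub>M Pu i) = PiM {..<N} M'"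
    by (rule PiM_cong) (auto simp: M'_def)
  have PM': "prob_space (M' i)" for i
  proof (cases "i < N")
    case True
    then have "prob_space (Pd i)" "prob_space (Pg i)" "prob_space (Pu i)"
      using ucd ucu so by (auto simp: unbiased_compressor_def stoch_oracle_def random_operator_def)
    then show ?thesis using True by (simp add: M'_def prob_space_pair)
  next
    case False then show ?thesis by (simp add: M'_def prob_space_return)
  qed
  define Y where "Y i z = (1 / real N) *\<^sub>R (\<kappa> *\<^sub>R (gradF (H i + Cd i (fst z) (w - H i)) - gradF w) +
            (Cu i (snd (snd z)) (g i (fst (snd z)) (H i + Cd i (fst z) (w - H i))) - gradF (H i + Cd i (fst z) (w - H i))))" for i z
  note rc = RC[OF ucd[rule_format] ucu[rule_format] so[rule_format] omd omu v gl bnd, where c="1 / real N" and \<kappa>=\<kappa> and w=w]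
  have apY: "AP (M' i) (Y i)" and mY: "Y i \<in> borel_measurable (M' i)"
    and bY: "(\<integral>\<^sup>+z. ennreal ((norm (Y i z))\<^sup>2) \<partial>M' i) \<le> ennreal ((1 / real N)\<^sup>2 * (\<kappa>\<^sup>2 * (L\<^sup>2 * \<omega>d * (norm (w - H i))\<^sup>2) +
          (\<omega>u * ((norm (gradF w))\<^sup>2 + L\<^sup>2 * \<omega>d * (norm (w - H i))\<^sup>2) + (1 + \<omega>u) * v)))"
    if "i < N" for i
    using rc[OF that that that, where H="H i"] that unfolding Y_def M'_def by auto
  have eq: "(1 / real N) *\<^sub>R (\<Sum>i<N.
            Cu i (snd (snd (\<xi> i))) (g i (fst (snd (\<xi> i))) (H i + Cd i (fst (\<xi> i)) (w - H i)))
            - (1 - \<kappa>) *\<^sub>R gradF (H i + Cd i (fst (\<xi> i)) (w - H i)))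
       = \<kappa> *\<^sub>R gradF w + (\<Sum>i<N. Y i (\<xi> i))" for \<xi>
  proof -
    define U where "U i = Cu i (snd (snd (\<xi> i))) (g i (fst (snd (\<xi> i))) (H i + Cd i (fst (\<xi> i)) (w - H i)))
            - (1 - \<kappa>) *\<^sub>R gradF (H i + Cd i (fst (\<xi> i)) (w - H i))" for i
    have "Y i (\<xi> i) = (1 / real N) *\<^sub>R U i - (1 / real N) *\<^sub>R (\<kappa> *\<^sub>R gradF w)" for i
      unfolding Y_def U_def by (simp add: algebra_simps)
    then have "(\<Sum>i<N. Y i (\<xi> i)) = (\<Sum>i<N. (1 / real N) *\<^sub>R U i) - (\<Sum>i<N. (1 / real N) *\<^sub>R (\<kappa> *\<^sub>R gradF w))"
      by (simp only: sum_subtractf)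
    also have "\<dots> = (1 / real N) *\<^sub>R (\<Sum>i<N. U i) - real N *\<^sub>R ((1 / real N) *\<^sub>R (\<kappa> *\<^sub>R gradF w))"
      by (simp only: scaleR_sum_right sum_constant_scaleR card_lessThan)
    also have "real N *\<^sub>R ((1 / real N) *\<^sub>R (\<kappa> *\<^sub>R gradF w)) = \<kappa> *\<^sub>R gradF w" using N1 by simp
    finally show ?thesis unfolding U_def by simp
  qed
  have "(\<integral>\<^sup>+\<xi>. ennreal ((norm ((1 / real N) *\<^sub>R (\<Sum>i<N.
            Cu i (snd (snd (\<xi> i))) (g i (fst (snd (\<xi> i))) (H i + Cd i (fst (\<xi> i)) (w - H i)))
            - (1 - \<kappa>) *\<^sub>R gradF (H i + Cd i (fst (\<xi> i)) (w - H i)))))\<^sup>2)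
         \<partial>PiM {..<N} (\<lambda>i. Pd i \<Otimes>\<^sub>M Pg i \<Otimes>\<^sub>M Pu i))
      = (\<integral>\<^sup>+\<xi>. ennreal ((norm (\<kappa> *\<^sub>R gradF w + (\<Sum>i<N. Y i (\<xi> i))))\<^sup>2) \<partial>PiM {..<N} M')"
    unfolding PiM_eq eq ..
  also have "\<dots> = ennreal ((norm (\<kappa> *\<^sub>R gradF w))\<^sup>2) + (\<Sum>i<N. \<integral>\<^sup>+z. ennreal ((norm (Y i z))\<^sup>2) \<partial>M' i)"
    by (rule AP_PiM[OF _ PM' mY apY]) auto
  also have "\<dots> \<le> ennreal ((norm (\<kappa> *\<^sub>R gradF w))\<^sup>2) + (\<Sum>i<N. ennreal ((1 / real N)\<^sup>2 * (\<kappa>\<^sup>2 * (L\<^sup>2 * \<omega>d * (norm (w - H i))\<^sup>2) +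
          (\<omega>u * ((norm (gradF w))\<^sup>2 + L\<^sup>2 * \<omega>d * (norm (w - H i))\<^sup>2) + (1 + \<omega>u) * v))))"
    by (intro add_left_mono sum_mono bY) auto
  also have "\<dots> = ennreal (\<kappa>\<^sup>2 * (norm (gradF w))\<^sup>2 + (\<Sum>i<N. (1 / real N)\<^sup>2 * (\<kappa>\<^sup>2 * (L\<^sup>2 * \<omega>d * (norm (w - H i))\<^sup>2) +
          (\<omega>u * ((norm (gradF w))\<^sup>2 + L\<^sup>2 * \<omega>d * (norm (w - H i))\<^sup>2) + (1 + \<omega>u) * v))))"
    using omd omu v by (subst sum_ennreal) (auto simp: power_mult_distrib intro!: ennreal_plus[symmetric] sum_nonneg add_nonneg_nonneg mult_nonneg_nonneg)
  also have "\<dots> = ennreal ((\<kappa>\<^sup>2 + \<omega>u / real N) * (norm (gradF w))\<^sup>2 + (1 + \<omega>u) * v / real N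
        + L\<^sup>2 * \<omega>d * (\<kappa>\<^sup>2 / real N + \<omega>u / real N) * ((1 / real N) * (\<Sum>i<N. (norm (w - H i))\<^sup>2)))"
    by (subst real_eq_rand[OF N1]) rule
  finally show ?thesis .
qed

lemma AP_pair_int:
  fixes Z :: "'a \<Rightarrow> 'v::euclidean_space"
  assumes P2: "prob_space M2"
    and mZ[measurable]: "Z \<in> borel_measurable M1" and mE[measurable]: "E \<in> borel_measurable (M1 \<Otimes>\<^sub>M M2)"
    and apE: "\<And>d. d \<in> space M1 \<Longrightarrow> AP M2 (\<lambda>e. E (d, e))"
  shows "(\<integral>\<^sup>+p. ennreal ((norm (Z (fst p) + E p))\<^sup>2) \<partial>(M1 \<Otimes>\<^sub>M M2)) =
     (\<integral>\<^sup>+d. ennreal ((norm (Z d))\<^sup>2) \<partial>M1) + (\<integral>\<^sup>+d. \<integral>\<^sup>+e. ennreal ((norm (E (d, e)))\<^sup>2) \<partial>M2 \<partial>M1)"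
proof -
  interpret p2: prob_space M2 by (rule P2)
  define s where "s d = (\<integral>\<^sup>+e. ennreal ((norm (E (d, e)))\<^sup>2) \<partial>M2)" for d
  have ms: "s \<in> borel_measurable M1" unfolding s_def by measurable
  have "(\<integral>\<^sup>+p. ennreal ((norm (Z (fst p) + E p))\<^sup>2) \<partial>(M1 \<Otimes>\<^sub>M M2)) =
       (\<integral>\<^sup>+d. \<integral>\<^sup>+e. ennreal ((norm (Z d + E (d, e)))\<^sup>2) \<partial>M2 \<partial>M1)"
    by (subst p2.nn_integral_fst[symmetric]) auto
  also have "\<dots> = (\<integral>\<^sup>+d. ennreal ((norm (Z d))\<^sup>2) + s d \<partial>M1)"
    using apE unfolding AP_def s_def by (intro nn_integral_cong) auto
  also have "\<dots> = (\<integral>\<^sup>+d. ennreal ((norm (Z d))\<^sup>2) \<partial>M1) + (\<integral>\<^sup>+d. s d \<partial>M1)"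
    using ms by (intro nn_integral_add) auto
  finally show ?thesis unfolding s_def .
qed

lemma AP_lift:
  fixes F :: "'b \<Rightarrow> 'v::euclidean_space"
  assumes P1: "prob_space M1" and P2: "prob_space M2" and mF[measurable]: "F \<in> borel_measurable M2" and ap: "AP M2 F"
  shows "AP (M1 \<Otimes>\<^sub>M M2) (\<lambda>z. F (snd z))"
    "(\<integral>\<^sup>+z. ennreal ((norm (F (snd z)))\<^sup>2) \<partial>(M1 \<Otimes>\<^sub>M M2)) = (\<integral>\<^sup>+p. ennreal ((norm (F p))\<^sup>2) \<partial>M2)"
proof -
  interpret p1: prob_space M1 by (rule P1)
  have ap0: "AP M1 (\<lambda>_. 0::'v)" unfolding AP_def by (simp add: p1.emeasure_space_1)
  have mE: "(\<lambda>z. F (snd z)) \<in> borel_measurable (M1 \<Otimes>\<^sub>M M2)" by measurable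
  note pr = AP_pair[OF P1 P2 _ mE ap0, simplified]
  show "AP (M1 \<Otimes>\<^sub>M M2) (\<lambda>z. F (snd z))" using pr(1) ap by simp
  show "(\<integral>\<^sup>+z. ennreal ((norm (F (snd z)))\<^sup>2) \<partial>(M1 \<Otimes>\<^sub>M M2)) = (\<integral>\<^sup>+p. ennreal ((norm (F p))\<^sup>2) \<partial>M2)"
    using pr(2) ap by (simp add: p1.emeasure_space_1)
qed

lemma sc1: "a - (1 - k) *\<^sub>R u = (a - u) + k *\<^sub>R (u::'a::real_vector)"
  by (simp add: algebra_simps)

lemma mcm_case:
  fixes gradF :: "real^'n \<Rightarrow> real^'n" and A :: "real^'n^'n"
    and Pd :: "nat \<Rightarrow> 'd measure" and Cd :: "nat \<Rightarrow> 'd \<Rightarrow> real^'n \<Rightarrow> real^'n"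
    and Pg :: "nat \<Rightarrow> 'g measure" and g :: "nat \<Rightarrow> 'g \<Rightarrow> real^'n \<Rightarrow> real^'n"
    and Pu :: "nat \<Rightarrow> 'u measure" and Cu :: "nat \<Rightarrow> 'u \<Rightarrow> real^'n \<Rightarrow> real^'n"
    and w :: "real^'n" and H :: "nat \<Rightarrow> real^'n" and N :: nat
  assumes N1: "N \<ge> 1"
    and ucd: "\<forall>i<N. unbiased_compressor (Pd i) (Cd i) \<omega>d"
    and ucu: "\<forall>i<N. unbiased_compressor (Pu i) (Cu i) \<omega>u"
    and so: "\<forall>i<N. stoch_oracle (Pg i) (g i) gradF v"
    and omd: "\<omega>d \<ge> 0" and omu: "\<omega>u \<ge> 0" and v: "v \<ge> 0"
    and gl: "\<And>x. gradF x = A *v (x - wst)" and bnd: "\<And>v. norm (A *v v) \<le> L * norm v"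
    and hH: "\<forall>i<N. H i = H 0"
  shows "(\<integral>\<^sup>+\<xi>. ennreal ((norm ((1 / real N) *\<^sub>R (\<Sum>i<N.
            Cu i (snd (snd (\<xi> i))) (g i (fst (snd (\<xi> i))) (H i + Cd 0 (fst (\<xi> 0)) (w - H i)))
            - (1 - \<kappa>) *\<^sub>R gradF (H i + Cd 0 (fst (\<xi> 0)) (w - H i)))))\<^sup>2)
         \<partial>PiM {..<N} (\<lambda>i. Pd i \<Otimes>\<^sub>M Pg i \<Otimes>\<^sub>M Pu i))
    \<le> ennreal ((\<kappa>\<^sup>2 + \<omega>u / real N) * (norm (gradF w))\<^sup>2 + (1 + \<omega>u) * v / real N
        + L\<^sup>2 * \<omega>d * (\<kappa>\<^sup>2 + \<omega>u / real N) * ((1 / real N) * (\<Sum>i<N. (norm (w - H i))\<^sup>2)))"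
proof -
  define M' where "M' i = (if i < N then Pd i \<Otimes>\<^sub>M (Pg i \<Otimes>\<^sub>M Pu i) else return (count_space UNIV) undefined)" for i
  have M'N: "M' i = Pd i \<Otimes>\<^sub>M (Pg i \<Otimes>\<^sub>M Pu i)" if "i < N" for i using that by (simp add: M'_def)
  have Ins: "{..<N} = insert 0 {1..<N}" using N1 by auto
  have PiM_eqX: "PiM {..<N} (\<lambda>i. Pd i \<Otimes>\<^sub>M Pg i \<Otimes>\<^sub>M Pu i) = PiM (insert 0 {1..<N}) M'"
    unfolding Ins[symmetric] by (rule PiM_cong) (auto simp: M'_def)
  have Pdi: "prob_space (Pd i)" and Pgi: "prob_space (Pg i)" and Pui: "prob_space (Pu i)" if "i < N" for i
    using ucd ucu so that by (auto simp: unbiased_compressor_def stoch_oracle_def random_operator_def)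
  have PQ: "prob_space (Pg i \<Otimes>\<^sub>M Pu i)" if "i < N" for i using Pgi[OF that] Pui[OF that] by (simp add: prob_space_pair)
  have PM': "prob_space (M' i)" for i
  proof (cases "i < N")
    case True
    then show ?thesis using Pdi[OF True] PQ[OF True] by (simp add: M'_def prob_space_pair)
  next
    case False then show ?thesis by (simp add: M'_def prob_space_return)
  qed
  interpret product_prob_space M' using PM'
    by (simp add: product_prob_space_def product_prob_space_axioms_def product_sigma_finite_def prob_space_imp_sigma_finite)
  have N0: "0 < N" using N1 by simp
  have mCd0[measurable]: "(\<lambda>(s, x). Cd 0 s x) \<in> borel_measurable (Pd 0 \<Otimes>\<^sub>M borel)"
    using ucd N0 by (auto simp: unbiased_compressor_def random_operator_def)
  have mCu: "(\<lambda>(s, x). Cu i s x) \<in> borel_measurable (Pu i \<Otimes>\<^sub>M borel)" if "i < N" for i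
    using ucu that by (auto simp: unbiased_compressor_def random_operator_def)
  have mg: "(\<lambda>(s, x). g i s x) \<in> borel_measurable (Pg i \<Otimes>\<^sub>M borel)" if "i < N" for i
    using so that by (auto simp: stoch_oracle_def random_operator_def)
  have mG[measurable]: "gradF \<in> borel_measurable borel" by (rule gradF_meas[OF gl])
  define x0 where "x0 d = H 0 + Cd 0 d (w - H 0)" for d
  have mx0[measurable]: "x0 \<in> borel_measurable (Pd 0)" unfolding x0_def by measurable
  define E where "E i x p = Cu i (snd p) (g i (fst p) x) - gradF x" for i x p
  have mE: "(\<lambda>z. E i (x0 (fst z)) (snd z)) \<in> borel_measurable (Pd 0 \<Otimes>\<^sub>M (Pg i \<Otimes>\<^sub>M Pu i))" if "i < N" for i
  proof -
    note [measurable] = mCu[OF that] mg[OF that]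
    show ?thesis unfolding E_def by measurable
  qed
  have mEc: "(\<lambda>p. E i x p) \<in> borel_measurable (Pg i \<Otimes>\<^sub>M Pu i)" if "i < N" for i x
  proof -
    note [measurable] = mCu[OF that] mg[OF that]
    show ?thesis unfolding E_def by measurable
  qed
  define c where "c = 1 / real N"
  note tc = TC[OF ucu[rule_format] so[rule_format] omu v]
  define b where "b x = c\<^sup>2 * (\<omega>u * (norm (gradF x))\<^sup>2 + (1 + \<omega>u) * v)" for x
  have b0: "b x \<ge> 0" for x unfolding b_def using omu v by (auto intro!: mult_nonneg_nonneg add_nonneg_nonneg)
  define f where "f \<xi> = ennreal ((norm (\<kappa> *\<^sub>R gradF (x0 (fst (\<xi> 0))) + c *\<^sub>R E 0 (x0 (fst (\<xi> 0))) (snd (\<xi> 0))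
      + (\<Sum>i\<in>{1..<N}. c *\<^sub>R E i (x0 (fst (\<xi> 0))) (snd (\<xi> i)))))\<^sup>2)" for \<xi> :: "nat \<Rightarrow> 'd \<times> 'g \<times> 'u"
  have eqf: "ennreal ((norm ((1 / real N) *\<^sub>R (\<Sum>i<N.
            Cu i (snd (snd (\<xi> i))) (g i (fst (snd (\<xi> i))) (H i + Cd 0 (fst (\<xi> 0)) (w - H i)))
            - (1 - \<kappa>) *\<^sub>R gradF (H i + Cd 0 (fst (\<xi> 0)) (w - H i)))))\<^sup>2) = f \<xi>" for \<xi>
  proof -
    define d0 where "d0 = fst (\<xi> 0)"
    have "(\<Sum>i<N. Cu i (snd (snd (\<xi> i))) (g i (fst (snd (\<xi> i))) (H i + Cd 0 (fst (\<xi> 0)) (w - H i)))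
            - (1 - \<kappa>) *\<^sub>R gradF (H i + Cd 0 (fst (\<xi> 0)) (w - H i)))
        = (\<Sum>i<N. E i (x0 d0) (snd (\<xi> i)) + \<kappa> *\<^sub>R gradF (x0 d0))"
    proof (rule sum.cong[OF refl])
      fix i assume "i \<in> {..<N}"
      then have hi: "H i = H 0" using hH by blast
      show "Cu i (snd (snd (\<xi> i))) (g i (fst (snd (\<xi> i))) (H i + Cd 0 (fst (\<xi> 0)) (w - H i)))
            - (1 - \<kappa>) *\<^sub>R gradF (H i + Cd 0 (fst (\<xi> 0)) (w - H i)) = E i (x0 d0) (snd (\<xi> i)) + \<kappa> *\<^sub>R gradF (x0 d0)"
        unfolding hi E_def x0_def d0_def by (rule sc1)
    qed
    also have "\<dots> = (\<Sum>i<N. E i (x0 d0) (snd (\<xi> i))) + real N *\<^sub>R (\<kappa> *\<^sub>R gradF (x0 d0))"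
      by (simp only: sum.distrib sum_constant_scaleR card_lessThan)
    finally have "(1 / real N) *\<^sub>R (\<Sum>i<N. Cu i (snd (snd (\<xi> i))) (g i (fst (snd (\<xi> i))) (H i + Cd 0 (fst (\<xi> 0)) (w - H i)))
            - (1 - \<kappa>) *\<^sub>R gradF (H i + Cd 0 (fst (\<xi> 0)) (w - H i)))
        = (\<Sum>i<N. c *\<^sub>R E i (x0 d0) (snd (\<xi> i))) + \<kappa> *\<^sub>R gradF (x0 d0)"
      using N1 by (simp only: scaleR_add_right scaleR_sum_right c_def scaleR_scaleR) simp
    also have "(\<Sum>i<N. c *\<^sub>R E i (x0 d0) (snd (\<xi> i))) = c *\<^sub>R E 0 (x0 d0) (snd (\<xi> 0)) + (\<Sum>i\<in>{1..<N}. c *\<^sub>R E i (x0 d0) (snd (\<xi> i)))"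
      unfolding Ins by (simp add: sum.insert)
    finally show ?thesis unfolding f_def d0_def by (simp add: ac_simps)
  qed
  have mf: "f \<in> borel_measurable (PiM (insert 0 {1..<N}) M')"
  proof -
    have c0: "(\<lambda>\<xi>. \<xi> 0) \<in> measurable (PiM (insert 0 {1..<N}) M') (Pd 0 \<Otimes>\<^sub>M (Pg 0 \<Otimes>\<^sub>M Pu 0))"
      using measurable_component_singleton[of 0 "insert 0 {1..<N}" M'] M'N[OF N0] by simp
    have m1: "(\<lambda>\<xi>. \<kappa> *\<^sub>R gradF (x0 (fst (\<xi> 0))) + c *\<^sub>R E 0 (x0 (fst (\<xi> 0))) (snd (\<xi> 0))) \<in> borel_measurable (PiM (insert 0 {1..<N}) M')"
    proof -
      have "(\<lambda>z. \<kappa> *\<^sub>R gradF (x0 (fst z)) + c *\<^sub>R E 0 (x0 (fst z)) (snd z)) \<in> borel_measurable (Pd 0 \<Otimes>\<^sub>M (Pg 0 \<Otimes>\<^sub>M Pu 0))"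
        using mE[OF N0] by measurable
      from measurable_compose[OF c0 this] show ?thesis by simp
    qed
    have m2: "(\<lambda>\<xi>. c *\<^sub>R E i (x0 (fst (\<xi> 0))) (snd (\<xi> i))) \<in> borel_measurable (PiM (insert 0 {1..<N}) M')"
      if "i \<in> {1..<N}" for i
    proof -
      have iN: "i < N" using that by auto
      have ci: "(\<lambda>\<xi>. (\<xi> 0, \<xi> i)) \<in> measurable (PiM (insert 0 {1..<N}) M') ((Pd 0 \<Otimes>\<^sub>M (Pg 0 \<Otimes>\<^sub>M Pu 0)) \<Otimes>\<^sub>M (Pd i \<Otimes>\<^sub>M (Pg i \<Otimes>\<^sub>M Pu i)))"
        using measurable_component_singleton[of 0 "insert 0 {1..<N}" M'] measurable_component_singleton[of i "insert 0 {1..<N}" M']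
          M'N[OF N0] M'N[OF iN] that by (intro measurable_Pair) auto
      have "(\<lambda>z. c *\<^sub>R E i (x0 (fst (fst z))) (snd (snd z))) \<in> borel_measurable ((Pd 0 \<Otimes>\<^sub>M (Pg 0 \<Otimes>\<^sub>M Pu 0)) \<Otimes>\<^sub>M (Pd i \<Otimes>\<^sub>M (Pg i \<Otimes>\<^sub>M Pu i)))"
      proof -
        note [measurable] = mCu[OF iN] mg[OF iN]
        show ?thesis unfolding E_def by measurable
      qed
      from measurable_compose[OF ci this] show ?thesis by simp
    qed
    have "(\<lambda>\<xi>. \<Sum>i\<in>{1..<N}. c *\<^sub>R E i (x0 (fst (\<xi> 0))) (snd (\<xi> i))) \<in> borel_measurable (PiM (insert 0 {1..<N}) M')"
      using m2 by (rule borel_measurable_sum)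
    with m1 show ?thesis unfolding f_def by measurable
  qed
  define a where "a y = \<kappa> *\<^sub>R gradF (x0 (fst y)) + c *\<^sub>R E 0 (x0 (fst y)) (snd y)" for y
  have inner: "(\<integral>\<^sup>+x. f (x(0 := y)) \<partial>PiM {1..<N} M')
      \<le> ennreal ((norm (a y))\<^sup>2) + ennreal (real (N - 1) * b (x0 (fst y)))" for y
  proof -
    define Yd where "Yd i (z::'d \<times> 'g \<times> 'u) = c *\<^sub>R E i (x0 (fst y)) (snd z)" for i z
    have fx: "f (x(0 := y)) = ennreal ((norm (a y + (\<Sum>i\<in>{1..<N}. Yd i (x i))))\<^sup>2)" for x
    proof -
      have "(\<Sum>i\<in>{1..<N}. c *\<^sub>R E i (x0 (fst ((x(0 := y)) 0))) (snd ((x(0 := y)) i))) = (\<Sum>i\<in>{1..<N}. Yd i (x i))"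
        by (intro sum.cong) (auto simp: Yd_def)
      then show ?thesis unfolding f_def a_def by (simp add: add.assoc)
    qed
    have apY: "AP (M' i) (Yd i)" and mY: "Yd i \<in> borel_measurable (M' i)"
      and iY: "(\<integral>\<^sup>+z. ennreal ((norm (Yd i z))\<^sup>2) \<partial>M' i) \<le> ennreal (b (x0 (fst y)))"
      if "i \<in> {1..<N}" for i
    proof -
      have iN: "i < N" using that by auto
      note lift = AP_lift[OF Pdi[OF iN] PQ[OF iN] _ tc(1)[OF iN iN, of c "x0 (fst y)"]]
      have mm: "(\<lambda>p. c *\<^sub>R (Cu i (snd p) (g i (fst p) (x0 (fst y))) - gradF (x0 (fst y)))) \<in> borel_measurable (Pg i \<Otimes>\<^sub>M Pu i)"
        using mEc[OF iN, of "x0 (fst y)"] unfolding E_def by measurable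
      show "AP (M' i) (Yd i)" using lift(1)[OF mm] unfolding M'N[OF iN] Yd_def E_def .
      have "(\<lambda>z. E i (x0 (fst y)) (snd z)) \<in> borel_measurable (Pd i \<Otimes>\<^sub>M (Pg i \<Otimes>\<^sub>M Pu i))"
        by (rule measurable_compose[OF measurable_snd mEc[OF iN]])
      then show "Yd i \<in> borel_measurable (M' i)" unfolding M'N[OF iN] Yd_def by measurable
      show "(\<integral>\<^sup>+z. ennreal ((norm (Yd i z))\<^sup>2) \<partial>M' i) \<le> ennreal (b (x0 (fst y)))"
        using lift(2)[OF mm] tc(2)[OF iN iN, of c "x0 (fst y)"] unfolding M'N[OF iN] Yd_def E_def b_def by simp
    qed
    have "(\<integral>\<^sup>+x. f (x(0 := y)) \<partial>PiM {1..<N} M') = (\<integral>\<^sup>+x. ennreal ((norm (a y + (\<Sum>i\<in>{1..<N}. Yd i (x i))))\<^sup>2) \<partial>PiM {1..<N} M')"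
      unfolding fx ..
    also have "\<dots> = ennreal ((norm (a y))\<^sup>2) + (\<Sum>i\<in>{1..<N}. \<integral>\<^sup>+z. ennreal ((norm (Yd i z))\<^sup>2) \<partial>M' i)"
      by (rule AP_PiM[OF _ PM' mY apY]) auto
    also have "\<dots> \<le> ennreal ((norm (a y))\<^sup>2) + (\<Sum>i\<in>{1..<N}. ennreal (b (x0 (fst y))))"
      by (intro add_left_mono sum_mono iY) auto
    also have "(\<Sum>i\<in>{1..<N}. ennreal (b (x0 (fst y)))) = ennreal (real (N - 1) * b (x0 (fst y)))"
      using b0 by (subst sum_ennreal) auto
    finally show ?thesis .
  qed
  have PQ0: "prob_space (Pg 0 \<Otimes>\<^sub>M Pu 0)" by (rule PQ[OF N0])
  interpret Q0: prob_space "Pg 0 \<Otimes>\<^sub>M Pu 0" by (rule PQ0)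
  have Pd0: "prob_space (Pd 0)" by (rule Pdi[OF N0])
  note mE0[measurable] = mE[OF N0]
  have ma: "(\<lambda>y. ennreal ((norm (a y))\<^sup>2)) \<in> borel_measurable (M' 0)"
    unfolding a_def M'N[OF N0] by measurable
  have mb: "(\<lambda>y. ennreal (real (N - 1) * b (x0 (fst y)))) \<in> borel_measurable (M' 0)"
    unfolding b_def M'N[OF N0] by measurable
  have fin: "finite {1..<N}" "0 \<notin> {1..<N}" by auto
  define G where "G d = (norm (gradF (x0 d)))\<^sup>2" for d
  have mGd[measurable]: "G \<in> borel_measurable (Pd 0)" unfolding G_def by measurable
  have G0: "G d \<ge> 0" for d unfolding G_def by simp
  have apE0: "AP (Pg 0 \<Otimes>\<^sub>M Pu 0) (\<lambda>p. c *\<^sub>R E 0 (x0 d) p)" for d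
    using tc(1)[OF N0 N0, of c "x0 d"] unfolding E_def .
  have mE0': "(\<lambda>y. c *\<^sub>R E 0 (x0 (fst y)) (snd y)) \<in> borel_measurable (Pd 0 \<Otimes>\<^sub>M (Pg 0 \<Otimes>\<^sub>M Pu 0))" by measurable
  have mZ0: "(\<lambda>d. \<kappa> *\<^sub>R gradF (x0 d)) \<in> borel_measurable (Pd 0)" by measurable
  have aint: "(\<integral>\<^sup>+y. ennreal ((norm (a y))\<^sup>2) \<partial>M' 0) \<le> (\<integral>\<^sup>+d. ennreal (\<kappa>\<^sup>2 * G d) \<partial>Pd 0) + (\<integral>\<^sup>+d. ennreal (b (x0 d)) \<partial>Pd 0)"
  proof -
    have "(\<integral>\<^sup>+y. ennreal ((norm (a y))\<^sup>2) \<partial>M' 0) = (\<integral>\<^sup>+y. ennreal ((norm (\<kappa> *\<^sub>R gradF (x0 (fst y)) + c *\<^sub>R E 0 (x0 (fst y)) (snd y)))\<^sup>2) \<partial>(Pd 0 \<Otimes>\<^sub>M (Pg 0 \<Otimes>\<^sub>M Pu 0)))"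
      unfolding a_def M'N[OF N0] ..
    also have "\<dots> = (\<integral>\<^sup>+d. ennreal ((norm (\<kappa> *\<^sub>R gradF (x0 d)))\<^sup>2) \<partial>Pd 0) + (\<integral>\<^sup>+d. \<integral>\<^sup>+p. ennreal ((norm (c *\<^sub>R E 0 (x0 d) p))\<^sup>2) \<partial>(Pg 0 \<Otimes>\<^sub>M Pu 0) \<partial>Pd 0)"
    proof -
      have apE0': "AP (Pg 0 \<Otimes>\<^sub>M Pu 0) (\<lambda>e. (\<lambda>y. c *\<^sub>R E 0 (x0 (fst y)) (snd y)) (d, e))" for d
        using apE0[of d] by simp
      show ?thesis using AP_pair_int[OF PQ0 mZ0 mE0' apE0'] by simp
    qed
    also have "\<dots> \<le> (\<integral>\<^sup>+d. ennreal (\<kappa>\<^sup>2 * G d) \<partial>Pd 0) + (\<integral>\<^sup>+d. ennreal (b (x0 d)) \<partial>Pd 0)"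
    proof (intro add_mono nn_integral_mono)
      fix d
      show "ennreal ((norm (\<kappa> *\<^sub>R gradF (x0 d)))\<^sup>2) \<le> ennreal (\<kappa>\<^sup>2 * G d)"
        by (simp add: G_def power_mult_distrib)
      show "(\<integral>\<^sup>+p. ennreal ((norm (c *\<^sub>R E 0 (x0 d) p))\<^sup>2) \<partial>(Pg 0 \<Otimes>\<^sub>M Pu 0)) \<le> ennreal (b (x0 d))"
        using tc(2)[OF N0 N0, of c "x0 d"] unfolding E_def b_def .
    qed
    finally show ?thesis .
  qed
  have bint: "(\<integral>\<^sup>+y. ennreal (real (N - 1) * b (x0 (fst y))) \<partial>M' 0) = (\<integral>\<^sup>+d. ennreal (real (N - 1) * b (x0 d)) \<partial>Pd 0)"
  proof -
    have "(\<integral>\<^sup>+y. ennreal (real (N - 1) * b (x0 (fst y))) \<partial>M' 0)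
        = (\<integral>\<^sup>+d. \<integral>\<^sup>+p. ennreal (real (N - 1) * b (x0 d)) \<partial>(Pg 0 \<Otimes>\<^sub>M Pu 0) \<partial>Pd 0)"
      unfolding M'N[OF N0] by (subst Q0.nn_integral_fst[symmetric]) (use mb[unfolded M'N[OF N0]] in auto)
    also have "\<dots> = (\<integral>\<^sup>+d. ennreal (real (N - 1) * b (x0 d)) \<partial>Pd 0)"
      by (simp add: Q0.emeasure_space_1)
    finally show ?thesis .
  qed
  have mbd: "(\<lambda>d. b (x0 d)) \<in> borel_measurable (Pd 0)" unfolding b_def by measurable
  have "(\<integral>\<^sup>+\<xi>. ennreal ((norm ((1 / real N) *\<^sub>R (\<Sum>i<N.
            Cu i (snd (snd (\<xi> i))) (g i (fst (snd (\<xi> i))) (H i + Cd 0 (fst (\<xi> 0)) (w - H i)))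
            - (1 - \<kappa>) *\<^sub>R gradF (H i + Cd 0 (fst (\<xi> 0)) (w - H i)))))\<^sup>2)
         \<partial>PiM {..<N} (\<lambda>i. Pd i \<Otimes>\<^sub>M Pg i \<Otimes>\<^sub>M Pu i)) = (\<integral>\<^sup>+\<xi>. f \<xi> \<partial>PiM (insert 0 {1..<N}) M')"
    unfolding eqf using PiM_eqX by simp
  also have "\<dots> = (\<integral>\<^sup>+y. \<integral>\<^sup>+x. f (x(0 := y)) \<partial>PiM {1..<N} M' \<partial>M' 0)"
    by (rule product_nn_integral_insert_rev[OF fin mf])
  also have "\<dots> \<le> (\<integral>\<^sup>+y. ennreal ((norm (a y))\<^sup>2) + ennreal (real (N - 1) * b (x0 (fst y))) \<partial>M' 0)"
    by (intro nn_integral_mono inner)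
  also have "\<dots> = (\<integral>\<^sup>+y. ennreal ((norm (a y))\<^sup>2) \<partial>M' 0) + (\<integral>\<^sup>+y. ennreal (real (N - 1) * b (x0 (fst y))) \<partial>M' 0)"
    using ma mb by (rule nn_integral_add)
  also have "\<dots> \<le> (\<integral>\<^sup>+d. ennreal (\<kappa>\<^sup>2 * G d) \<partial>Pd 0) + (\<integral>\<^sup>+d. ennreal (b (x0 d)) \<partial>Pd 0) + (\<integral>\<^sup>+d. ennreal (real (N - 1) * b (x0 d)) \<partial>Pd 0)"
    unfolding bint using aint by (rule add_right_mono)
  also have "\<dots> = (\<integral>\<^sup>+d. ennreal (\<kappa>\<^sup>2 * G d + b (x0 d) + real (N - 1) * b (x0 d)) \<partial>Pd 0)"
  proof -
    have "(\<integral>\<^sup>+d. ennreal (\<kappa>\<^sup>2 * G d + b (x0 d) + real (N - 1) * b (x0 d)) \<partial>Pd 0)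
       = (\<integral>\<^sup>+d. ennreal (\<kappa>\<^sup>2 * G d) + ennreal (b (x0 d)) + ennreal (real (N - 1) * b (x0 d)) \<partial>Pd 0)"
      using G0 b0 by (intro nn_integral_cong) (simp add: ennreal_plus)
    also have "\<dots> = (\<integral>\<^sup>+d. ennreal (\<kappa>\<^sup>2 * G d) + ennreal (b (x0 d)) \<partial>Pd 0) + (\<integral>\<^sup>+d. ennreal (real (N - 1) * b (x0 d)) \<partial>Pd 0)"
      using mbd by (intro nn_integral_add) auto
    also have "(\<integral>\<^sup>+d. ennreal (\<kappa>\<^sup>2 * G d) + ennreal (b (x0 d)) \<partial>Pd 0) = (\<integral>\<^sup>+d. ennreal (\<kappa>\<^sup>2 * G d) \<partial>Pd 0) + (\<integral>\<^sup>+d. ennreal (b (x0 d)) \<partial>Pd 0)"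
      using mbd by (intro nn_integral_add) auto
    finally show ?thesis by simp
  qed
  also have "\<dots> = (\<integral>\<^sup>+d. ennreal ((\<kappa>\<^sup>2 + \<omega>u / real N) * (norm (gradF (H 0 + Cd 0 d (w - H 0))))\<^sup>2 + (1 + \<omega>u) * v / real N) \<partial>Pd 0)"
  proof (intro nn_integral_cong arg_cong[where f=ennreal])
    fix d
    show "\<kappa>\<^sup>2 * G d + b (x0 d) + real (N - 1) * b (x0 d) = (\<kappa>\<^sup>2 + \<omega>u / real N) * (norm (gradF (H 0 + Cd 0 d (w - H 0))))\<^sup>2 + (1 + \<omega>u) * v / real N"
      using N1 unfolding G_def b_def c_def x0_def by (simp add: of_nat_diff field_simps power2_eq_square)
  qed
  also have "\<dots> \<le> ennreal ((\<kappa>\<^sup>2 + \<omega>u / real N) * ((norm (gradF w))\<^sup>2 + L\<^sup>2 * \<omega>d * (norm (w - H 0))\<^sup>2) + (1 + \<omega>u) * v / real N)"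
  proof (rule nn_lin[OF Pd0])
    show "(\<lambda>d. (norm (gradF (H 0 + Cd 0 d (w - H 0))))\<^sup>2) \<in> borel_measurable (Pd 0)" by measurable
    show "(\<integral>\<^sup>+d. ennreal ((norm (gradF (H 0 + Cd 0 d (w - H 0))))\<^sup>2) \<partial>Pd 0) \<le> ennreal ((norm (gradF w))\<^sup>2 + L\<^sup>2 * \<omega>d * (norm (w - H 0))\<^sup>2)"
      by (rule GD(3)[OF ucd[rule_format, OF N0] omd gl bnd])
  qed (use omu v omd in \<open>auto intro!: add_nonneg_nonneg mult_nonneg_nonneg\<close>)
  also have "\<dots> = ennreal ((\<kappa>\<^sup>2 + \<omega>u / real N) * (norm (gradF w))\<^sup>2 + (1 + \<omega>u) * v / real N
        + L\<^sup>2 * \<omega>d * (\<kappa>\<^sup>2 + \<omega>u / real N) * ((1 / real N) * (\<Sum>i<N. (norm (w - H i))\<^sup>2)))"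
  proof -
    have "(\<Sum>i<N. (norm (w - H i))\<^sup>2) = (\<Sum>i<N. (norm (w - H 0))\<^sup>2)"
      using hH by (intro sum.cong refl) (metis lessThan_iff)
    also have "\<dots> = real N * (norm (w - H 0))\<^sup>2" by simp
    finally have "(1 / real N) * (\<Sum>i<N. (norm (w - H i))\<^sup>2) = (norm (w - H 0))\<^sup>2" using N1 by simp
    then show ?thesis by (simp add: algebra_simps)
  qed
  finally show ?thesis .
qed

theorem mainTheorem11:
  fixes F :: "real^'n \<Rightarrow> real" and gradF :: "real^'n \<Rightarrow> real^'n"
    and A :: "real^'n^'n" and wst :: "real^'n"
    and L \<sigma> \<omega>up \<omega>dwn :: real and N b :: nat
    and alg :: variant
    and Pd :: "nat \<Rightarrow> 'd measure" and Cd :: "nat \<Rightarrow> 'd \<Rightarrow> real^'n \<Rightarrow> real^'n"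
    and Pg :: "nat \<Rightarrow> 'g measure" and g :: "nat \<Rightarrow> 'g \<Rightarrow> real^'n \<Rightarrow> real^'n"
    and Pu :: "nat \<Rightarrow> 'u measure" and Cu :: "nat \<Rightarrow> 'u \<Rightarrow> real^'n \<Rightarrow> real^'n"
    and w :: "real^'n" and H :: "nat \<Rightarrow> real^'n"
  assumes N_pos: "N \<ge> 1" and b_pos: "b \<ge> 1"
    and quad: "is_quadratic F A wst"
    and grad: "\<forall>x. GDERIV F x :> gradF x"
    and A2: "L_smooth F L"
    and om_up: "\<omega>up > 0" and om_dwn: "\<omega>dwn > 0"
    and A1_dwn: "\<forall>i<N. unbiased_compressor (Pd i) (Cd i) \<omega>dwn"
    and A1_up: "\<forall>i<N. unbiased_compressor (Pu i) (Cu i) \<omega>up"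
    and A4: "\<forall>i<N. stoch_oracle (Pg i) (g i) gradF (\<sigma>\<^sup>2 / real b)"
    and shared_mem: "alg = MCM \<Longrightarrow> \<forall>i<N. H i = H 0"
  shows "let \<Omega> = PiM {..<N} (\<lambda>i. Pd i \<Otimes>\<^sub>M Pg i \<Otimes>\<^sub>M Pu i);
             dsel = (\<lambda>i::nat. if alg = MCM then 0 else i);
             what = (\<lambda>i \<xi>. H i + Cd (dsel i) (fst (\<xi> (dsel i))) (w - H i));
             up = (\<lambda>i \<xi>. Cu i (snd (snd (\<xi> i))) (g i (fst (snd (\<xi> i))) (what i \<xi>)));
             C = (if alg = MCM then 1 else real N);
             D = (1 / real N) * (\<Sum>i<N. (norm (w - H i))\<^sup>2)
         in (\<integral>\<^sup>+\<xi>. ennreal ((norm ((1 / real N) *\<^sub>R (\<Sum>i<N. up i \<xi> - gradF (what i \<xi>))))\<^sup>2) \<partial>\<Omega>)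
              \<le> ennreal (\<omega>up / real N * (norm (gradF w))\<^sup>2
                        + \<sigma>\<^sup>2 * (1 + \<omega>up) / (real N * real b)
                        + \<omega>up * \<omega>dwn * L\<^sup>2 / real N * D)
          \<and> (\<integral>\<^sup>+\<xi>. ennreal ((norm ((1 / real N) *\<^sub>R (\<Sum>i<N. up i \<xi>)))\<^sup>2) \<partial>\<Omega>)
              \<le> ennreal ((1 + \<omega>up / real N) * (norm (gradF w))\<^sup>2
                        + \<sigma>\<^sup>2 * (1 + \<omega>up) / (real N * real b)
                        + L\<^sup>2 * \<omega>dwn * (1 / C + \<omega>up / real N) * D)"
proof -
  have gl: "\<And>x. gradF x = A *v (x - wst)" by (rule quad_grad[OF quad grad])
  obtain G where G: "\<forall>x. GDERIV F x :> G x" and GL: "\<forall>x y. norm (G x - G y) \<le> L * norm (x - y)"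
    using A2 unfolding L_smooth_def by blast
  have GG: "G x = gradF x" for x using G grad gderiv_unique by blast
  have bnd: "norm (A *v v) \<le> L * norm v" for v
  proof -
    have "A *v v = gradF (v + wst) - gradF wst" unfolding gl by simp
    then show ?thesis using GL[rule_format, of "v + wst" wst] unfolding GG by simp
  qed
  have omd: "\<omega>dwn \<ge> 0" and omu: "\<omega>up \<ge> 0" using om_up om_dwn by auto
  have v: "\<sigma>\<^sup>2 / real b \<ge> 0" by simp
  note rc = rand_case[OF N_pos A1_dwn A1_up A4 omd omu v gl bnd]
  note mc = mcm_case[OF N_pos A1_dwn A1_up A4 omd omu v gl bnd]
  show ?thesis
  proof (cases alg)
    case MCM
    note mc' = mc[OF shared_mem[OF MCM]]
    have a1: "(\<integral>\<^sup>+\<xi>. ennreal ((norm ((1 / real N) *\<^sub>R (\<Sum>i<N.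
            Cu i (snd (snd (\<xi> i))) (g i (fst (snd (\<xi> i))) (H i + Cd 0 (fst (\<xi> 0)) (w - H i)))
            - gradF (H i + Cd 0 (fst (\<xi> 0)) (w - H i)))))\<^sup>2)
         \<partial>PiM {..<N} (\<lambda>i. Pd i \<Otimes>\<^sub>M Pg i \<Otimes>\<^sub>M Pu i)) \<le> ennreal (\<omega>up / real N * (norm (gradF w))\<^sup>2
                        + \<sigma>\<^sup>2 * (1 + \<omega>up) / (real N * real b)
                        + \<omega>up * \<omega>dwn * L\<^sup>2 / real N * (1 / real N * (\<Sum>i<N. (norm (w - H i))\<^sup>2)))"
      using mc'[where \<kappa>=0] N_pos b_pos by (simp add: field_simps)
    have a2: "(\<integral>\<^sup>+\<xi>. ennreal ((norm ((1 / real N) *\<^sub>R (\<Sum>i<N.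
            Cu i (snd (snd (\<xi> i))) (g i (fst (snd (\<xi> i))) (H i + Cd 0 (fst (\<xi> 0)) (w - H i))))))\<^sup>2)
         \<partial>PiM {..<N} (\<lambda>i. Pd i \<Otimes>\<^sub>M Pg i \<Otimes>\<^sub>M Pu i)) \<le> ennreal ((1 + \<omega>up / real N) * (norm (gradF w))\<^sup>2
                        + \<sigma>\<^sup>2 * (1 + \<omega>up) / (real N * real b)
                        + L\<^sup>2 * \<omega>dwn * (1 / 1 + \<omega>up / real N) * (1 / real N * (\<Sum>i<N. (norm (w - H i))\<^sup>2)))"
      using mc'[where \<kappa>=1] N_pos b_pos by (simp add: field_simps)
    show ?thesis unfolding Let_def MCM using a1 a2 by (simp only: if_True simp_thms)
  next
    case Rand_MCM
    have a1: "(\<integral>\<^sup>+\<xi>. ennreal ((norm ((1 / real N) *\<^sub>R (\<Sum>i<N.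
            Cu i (snd (snd (\<xi> i))) (g i (fst (snd (\<xi> i))) (H i + Cd i (fst (\<xi> i)) (w - H i)))
            - gradF (H i + Cd i (fst (\<xi> i)) (w - H i)))))\<^sup>2)
         \<partial>PiM {..<N} (\<lambda>i. Pd i \<Otimes>\<^sub>M Pg i \<Otimes>\<^sub>M Pu i)) \<le> ennreal (\<omega>up / real N * (norm (gradF w))\<^sup>2
                        + \<sigma>\<^sup>2 * (1 + \<omega>up) / (real N * real b)
                        + \<omega>up * \<omega>dwn * L\<^sup>2 / real N * (1 / real N * (\<Sum>i<N. (norm (w - H i))\<^sup>2)))"
      using rc[where \<kappa>=0] N_pos b_pos by (simp add: field_simps)
    have a2: "(\<integral>\<^sup>+\<xi>. ennreal ((norm ((1 / real N) *\<^sub>R (\<Sum>i<N.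
            Cu i (snd (snd (\<xi> i))) (g i (fst (snd (\<xi> i))) (H i + Cd i (fst (\<xi> i)) (w - H i))))))\<^sup>2)
         \<partial>PiM {..<N} (\<lambda>i. Pd i \<Otimes>\<^sub>M Pg i \<Otimes>\<^sub>M Pu i)) \<le> ennreal ((1 + \<omega>up / real N) * (norm (gradF w))\<^sup>2
                        + \<sigma>\<^sup>2 * (1 + \<omega>up) / (real N * real b)
                        + L\<^sup>2 * \<omega>dwn * (1 / real N + \<omega>up / real N) * (1 / real N * (\<Sum>i<N. (norm (w - H i))\<^sup>2)))"
      using rc[where \<kappa>=1] N_pos b_pos by (simp add: field_simps)
    show ?thesis unfolding Let_def Rand_MCM using a1 a2 by simp
  qed
qed

end
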